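(* The problem of sustainable evolution is undecidable even when the input stream is fixed to be the all-$0$ stream $000\cdots$: there is no algorithm that, given a deterministic autopoietic automaton $A$, decides whether $A$, reading the input stream $000\cdots$, generates an infinite lineage.
   Context: A (deterministic) autopoietic automaton $A$ is a finite automaton with state set $Q$, a start state $q_0 \in Q\setminus R$, a subset $R\subseteq Q$ of reproducing-mode states (states in $Q\setminus R$ are transducer-mode states), a special state $q_1\in R$, and a transition partial function $\delta$. The automaton has a finite read-only input tape containing the code of $A$ (a sequence of 5-tuples, one per transition). In reproducing mode the automaton moves a head on this input tape and writes onto a one-way output tape; in transducer mode it reads one symbol at a time from an infinite input stream and writes one symbol at a time to an output stream. When reproducing mode ends by entering $q_1$, $A$ splits into the old $A$ and an offspring $A'$ whose input tape is the previous output tape; both restart in $q_0$, and the offspring continues reading the input stream from the current position. If the offspring's input tape is not a proper encoding of a transition function, it stops. A lineage is a sequence $A_1=A, A_2, \dots$ in which each $A_{i+1}$ is the new offspring of $A_i$. The problem of sustainable evolution asks, for an autopoietic automaton and an infinite input stream, whether the automaton generates an infinite lineage on that input. *)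

theory Defs
  imports Main
begin

datatype recf =
    Zr
  | Sc
  | Id nat nat
  | Cn nat recf "recf list"
  | Pr nat recf recf
  | Mn nat recf

inductive rec_eval :: "recf \<Rightarrow> nat list \<Rightarrow> nat \<Rightarrow> bool" where
  ev_Zr: "rec_eval Zr [x] 0"
| ev_Sc: "rec_eval Sc [x] (Suc x)"
| ev_Id: "\<lbrakk>k < n; length xs = n\<rbrakk> \<Longrightarrow> rec_eval (Id n k) xs (xs ! k)"
| ev_Cn: "\<lbrakk>length xs = n; list_all2 (\<lambda>g y. rec_eval g xs y) gs ys; rec_eval f ys z\<rbrakk>
          \<Longrightarrow> rec_eval (Cn n f gs) xs z"
| ev_Pr0: "\<lbrakk>length xs = n; rec_eval f xs y\<rbrakk> \<Longrightarrow> rec_eval (Pr n f g) (0 # xs) y"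
| ev_PrS: "\<lbrakk>rec_eval (Pr n f g) (x # xs) y; rec_eval g (x # y # xs) z\<rbrakk>
          \<Longrightarrow> rec_eval (Pr n f g) (Suc x # xs) z"
| ev_Mn: "\<lbrakk>length xs = n; rec_eval f (r # xs) 0;
           \<forall>i<r. \<exists>y. rec_eval f (i # xs) y \<and> y \<noteq> 0\<rbrakk>
          \<Longrightarrow> rec_eval (Mn n f) xs r"

text \<open>Tape alphabet.  \<open>Z\<close> is the stream symbol 0; \<open>One1\<close> is the unary digit used
  in encodings; \<open>SR\<close>/\<open>ST\<close> flag reproducing/transducer states; \<open>EndN\<close> ends a
  state number; \<open>MvL\<close>,\<open>MvN\<close>,\<open>MvR\<close> encode head moves; \<open>LEnd\<close>/\<open>REnd\<close> are the
  endmarkers of the input tape; writing \<open>Blank\<close> in reproducing mode writes nothing.\<close>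

datatype sym = Z | One1 | SR | ST | EndN | MvL | MvN | MvR | LEnd | REnd | Blank

datatype move = Lft | Stay | Rgt

text \<open>A state is a pair (number, reproducing-flag); \<open>R\<close> = states with flag True.\<close>
type_synonym state = "nat \<times> bool"

definition q0 :: state where "q0 = (0, False)"
definition q1 :: state where "q1 = (0, True)"

type_synonym tuple = "state \<times> sym \<times> state \<times> sym \<times> move"

fun enc_state :: "state \<Rightarrow> sym list" where
  "enc_state (k, r) = [if r then SR else ST] @ replicate k One1 @ [EndN]"

fun enc_move :: "move \<Rightarrow> sym" where
  "enc_move Lft = MvL" | "enc_move Stay = MvN" | "enc_move Rgt = MvR"

fun enc_tuple :: "tuple \<Rightarrow> sym list" where
  "enc_tuple (p, a, q, b, d) = enc_state p @ [a] @ enc_state q @ [b] @ [enc_move d]"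

definition functional_tuples :: "tuple list \<Rightarrow> bool" where
  "functional_tuples ts \<longleftrightarrow>
     (\<forall>t1\<in>set ts. \<forall>t2\<in>set ts. fst t1 = fst t2 \<and> fst (snd t1) = fst (snd t2) \<longrightarrow> t1 = t2)"

definition proper_code :: "sym list \<Rightarrow> bool" where
  "proper_code w \<longleftrightarrow> (\<exists>ts. w = concat (map enc_tuple ts) \<and> functional_tuples ts)"

text \<open>The transition relation encoded by a word (a partial function for proper codes,
  since the encoding is uniquely decodable).\<close>
definition has_tuple :: "sym list \<Rightarrow> tuple \<Rightarrow> bool" where
  "has_tuple w t \<longleftrightarrow> (\<exists>ts. w = concat (map enc_tuple ts) \<and> t \<in> set ts)"

definition tape :: "sym list \<Rightarrow> sym list" where
  "tape w = LEnd # w @ [REnd]"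

fun move_head :: "nat \<Rightarrow> move \<Rightarrow> nat \<Rightarrow> nat" where
  "move_head len Lft i = i - 1"
| "move_head len Stay i = i"
| "move_head len Rgt i = min (Suc i) (len - 1)"

text \<open>Configuration of one individual: state, input-head position, output tape.
  The input stream is the all-0 stream, so every symbol read from it is \<open>Z\<close>
  (and the position in the stream is irrelevant); the output stream is irrelevant
  for lineages and is not recorded.\<close>
type_synonym config = "state \<times> nat \<times> sym list"

definition step :: "sym list \<Rightarrow> config \<Rightarrow> config \<Rightarrow> bool" where
  "step w c c' \<longleftrightarrow>
     (case c of (q, i, out) \<Rightarrow> case c' of (q', i', out') \<Rightarrow>
       (\<exists>a b d. has_tuple w (q, a, q', b, d) \<and>
          (if snd q then
             a = tape w ! i \<and> i' = move_head (length (tape w)) d i \<and>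
             out' = (if b = Blank then out else out @ [b])
           else a = Z \<and> i' = i \<and> out' = out)))"

text \<open>A step that does not enter \<open>q1\<close> (entering \<open>q1\<close> immediately causes a split).\<close>
definition step_nq :: "sym list \<Rightarrow> config \<Rightarrow> config \<Rightarrow> bool" where
  "step_nq w c c' \<longleftrightarrow> step w c c' \<and> fst c' \<noteq> q1"

text \<open>\<open>offspring w w'\<close>: the automaton with code \<open>w\<close>, started in \<open>q0\<close> with the
  input head on the left endmarker and empty output tape, reading \<open>000\<cdots>\<close>,
  first enters \<open>q1\<close> with output tape \<open>w'\<close>; \<open>w'\<close> is the offspring's input tape.\<close>
definition offspring :: "sym list \<Rightarrow> sym list \<Rightarrow> bool" where
  "offspring w w' \<longleftrightarrow> proper_code w \<and>
     (\<exists>c i. (step_nq w)\<^sup>*\<^sup>* (q0, 0, []) c \<and> step w c (q1, i, w'))"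

definition infinite_lineage :: "sym list \<Rightarrow> bool" where
  "infinite_lineage w \<longleftrightarrow>
     (\<exists>A :: nat \<Rightarrow> sym list. A 0 = w \<and> (\<forall>n. offspring (A n) (A (Suc n))))"

fun sym_num :: "sym \<Rightarrow> nat" where
  "sym_num Z = 0" | "sym_num One1 = 1" | "sym_num SR = 2" | "sym_num ST = 3"
| "sym_num EndN = 4" | "sym_num MvL = 5" | "sym_num MvN = 6" | "sym_num MvR = 7"
| "sym_num LEnd = 8" | "sym_num REnd = 9" | "sym_num Blank = 10"

fun word_num :: "sym list \<Rightarrow> nat" where
  "word_num [] = 0"
| "word_num (s # w) = Suc (sym_num s) + 11 * word_num w"

end

theory Submission
  imports Defs "HOL-Library.Countable"
begin


datatype instr = Inc nat | Dec nat nat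

type_synonym regs = "nat \<Rightarrow> nat"
type_synonym cconf = "nat \<times> regs"

definition cstep :: "instr list \<Rightarrow> cconf \<Rightarrow> cconf \<Rightarrow> bool" where
 "cstep p c c' \<longleftrightarrow> (case c of (pc, s) \<Rightarrow> pc < length p \<and>
    (case p ! pc of Inc r \<Rightarrow> c' = (Suc pc, s(r := Suc (s r)))
     | Dec r j \<Rightarrow> c' = (if s r = 0 then (j, s) else (Suc pc, s(r := s r - 1)))))"

fun shi :: "nat \<Rightarrow> instr \<Rightarrow> instr" where
  "shi n (Inc r) = Inc r" | "shi n (Dec r j) = Dec r (j+n)"

definition shift :: "nat \<Rightarrow> instr list \<Rightarrow> instr list" where "shift n p = map (shi n) p"

definition reaches :: "instr list \<Rightarrow> regs \<Rightarrow> regs \<Rightarrow> bool" where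
  "reaches p s s' \<longleftrightarrow> (cstep p)\<^sup>*\<^sup>* (0,s) (length p, s')"

definition sq :: "instr list \<Rightarrow> instr list \<Rightarrow> instr list" (infixr "\<bullet>" 60) where
  "sq p q = p @ shift (length p) q"

lemma shift0[simp]: "shift 0 p = p"
proof -
  have "shi 0 i = i" for i by (cases i) auto
  then show ?thesis unfolding shift_def by (simp add: map_idI)
qed

lemma length_shift[simp]: "length (shift n p) = length p" by (simp add: shift_def)
lemma length_sq[simp]: "length (p \<bullet> q) = length p + length q" by (simp add: sq_def)

lemma cstep_det: "cstep p c c1 \<Longrightarrow> cstep p c c2 \<Longrightarrow> c1 = c2"
  unfolding cstep_def by (auto split: prod.splits instr.splits)

lemma cstep_embed:
  assumes "cstep p (i,s) (j,s')"
  shows "cstep (pre @ shift (length pre) p @ post) (length pre + i, s) (length pre + j, s')"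
proof -
  have i: "i < length p" using assms by (simp add: cstep_def)
  have nth: "(pre @ shift (length pre) p @ post) ! (length pre + i) = shi (length pre) (p ! i)"
    using i by (simp add: nth_append shift_def)
  show ?thesis using assms i unfolding cstep_def
    by (cases "p ! i") (simp_all only: nth shi.simps split_conv instr.case, auto)
qed

lemma rt_embed:
  assumes "(cstep p)\<^sup>*\<^sup>* (i,s) (j,s')"
  shows "(cstep (pre @ shift (length pre) p @ post))\<^sup>*\<^sup>* (length pre + i, s) (length pre + j, s')"
  using assms
proof (induction rule: rtranclp_induct2)
  case refl then show ?case by simp
next
  case (step a b c d)
  then show ?case using cstep_embed[of p a b c d pre post]
    by (meson rtranclp.rtrancl_into_rtrancl)
qed

lemma reaches_embed:
  assumes "reaches p s s'"
  shows "(cstep (pre @ shift (length pre) p @ post))\<^sup>*\<^sup>* (length pre, s) (length pre + length p, s')"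
  using rt_embed[OF assms[unfolded reaches_def], of pre post] by simp

lemma reaches_sq: "reaches p s1 s2 \<Longrightarrow> reaches q s2 s3 \<Longrightarrow> reaches (p \<bullet> q) s1 s3"
proof -
  assume a: "reaches p s1 s2" and b: "reaches q s2 s3"
  have 1: "(cstep (p \<bullet> q))\<^sup>*\<^sup>* (0, s1) (length p, s2)"
    using reaches_embed[OF a, of "[]" "shift (length p) q"] by (simp add: sq_def)
  have 2: "(cstep (p \<bullet> q))\<^sup>*\<^sup>* (length p, s2) (length p + length q, s3)"
    using reaches_embed[OF b, of p "[]"] by (simp add: sq_def)
  show ?thesis unfolding reaches_def using 1 2 by simp
qed

lemma reaches_nil[simp]: "reaches [] s s' \<longleftrightarrow> s' = s"
proof
  assume "reaches [] s s'"
  then have "(cstep [])\<^sup>*\<^sup>* (0,s) (0,s')" by (simp add: reaches_def)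
  then show "s' = s"
    by (cases rule: converse_rtranclpE) (auto simp: cstep_def)
qed (simp add: reaches_def)

lemma reaches_Inc: "reaches [Inc r] s (s(r := Suc (s r)))"
  unfolding reaches_def by (rule r_into_rtranclp) (simp add: cstep_def)

text \<open>The zero register is register 1.\<close>
definition whl :: "nat \<Rightarrow> instr list \<Rightarrow> instr list" where
  "whl k body = [Dec k (length body + 2)] @ shift 1 body @ [Dec 1 0]"

lemma whl_run:
  assumes body: "\<And>i. i < n \<Longrightarrow> S i k \<noteq> 0 \<and> reaches body ((S i)(k := S i k - 1)) (S (Suc i)) \<and> S (Suc i) 1 = 0"
    and fin: "S n k = 0"
  shows "reaches (whl k body) (S 0) (S n)"
proof -
  let ?W = "whl k body"
  have "\<forall>i. i + m = n \<longrightarrow> (cstep ?W)\<^sup>*\<^sup>* (0, S i) (length ?W, S n)" for m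
  proof (induction m)
    case 0
    show ?case
    proof (intro allI impI)
      fix i assume "i + 0 = n"
      then have "cstep ?W (0, S i) (length ?W, S n)"
        using fin by (simp add: cstep_def whl_def)
      then show "(cstep ?W)\<^sup>*\<^sup>* (0, S i) (length ?W, S n)" by blast
    qed
  next
    case (Suc m)
    show ?case
    proof (intro allI impI)
      fix i assume im: "i + Suc m = n"
      then have lt: "i < n" by simp
      from body[OF lt] have nz: "S i k \<noteq> 0" and rb: "reaches body ((S i)(k := S i k - 1)) (S (Suc i))"
        and z: "S (Suc i) 1 = 0" by auto
      have s1: "cstep ?W (0, S i) (1, (S i)(k := S i k - 1))"
        using nz by (simp add: cstep_def whl_def)
      have s2: "(cstep ?W)\<^sup>*\<^sup>* (1, (S i)(k := S i k - 1)) (1 + length body, S (Suc i))"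
        using reaches_embed[OF rb, of "[Dec k (length body + 2)]" "[Dec 1 0]"] by (simp add: whl_def)
      have s3: "cstep ?W (1 + length body, S (Suc i)) (0, S (Suc i))"
        using z by (simp add: cstep_def whl_def nth_append)
      have s4: "(cstep ?W)\<^sup>*\<^sup>* (0, S (Suc i)) (length ?W, S n)"
        using Suc.IH im by auto
      show "(cstep ?W)\<^sup>*\<^sup>* (0, S i) (length ?W, S n)"
        using s1 s2 s3 s4 by (meson converse_rtranclp_into_rtranclp rtranclp_trans)
    qed
  qed
  then show ?thesis unfolding reaches_def by auto
qed

definition dl :: "instr list \<Rightarrow> nat \<Rightarrow> instr list \<Rightarrow> instr list" where
  "dl B1 t B2 = B1 @ [Dec t (length B1 + length B2 + 2)] @ shift (Suc (length B1)) B2 @ [Dec 1 0]"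

lemma dl_run:
  assumes body: "\<And>i. i < n \<Longrightarrow> X i t \<noteq> 0 \<and> reaches B1 (S i) (X i) \<and>
        reaches B2 ((X i)(t := X i t - 1)) (S (Suc i)) \<and> S (Suc i) 1 = 0"
    and fin: "reaches B1 (S n) (X n)" "X n t = 0"
  shows "reaches (dl B1 t B2) (S 0) (X n)"
proof -
  let ?W = "dl B1 t B2"
  have "\<forall>i. i + m = n \<longrightarrow> (cstep ?W)\<^sup>*\<^sup>* (0, S i) (length ?W, X n)" for m
  proof (induction m)
    case 0
    show ?case
    proof (intro allI impI)
      fix i assume "i + 0 = n"
      then have i: "i = n" by simp
      have a: "(cstep ?W)\<^sup>*\<^sup>* (0, S n) (length B1, X n)"
        using reaches_embed[OF fin(1), of "[]"] by (simp add: dl_def)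
      have "cstep ?W (length B1, X n) (length ?W, X n)"
        using fin(2) by (simp add: cstep_def dl_def nth_append)
      then show "(cstep ?W)\<^sup>*\<^sup>* (0, S i) (length ?W, X n)" using a i by auto
    qed
  next
    case (Suc m)
    show ?case
    proof (intro allI impI)
      fix i assume im: "i + Suc m = n"
      then have lt: "i < n" by simp
      from body[OF lt] have nz: "X i t \<noteq> 0" and r1: "reaches B1 (S i) (X i)"
        and r2: "reaches B2 ((X i)(t := X i t - 1)) (S (Suc i))"
        and z: "S (Suc i) 1 = 0" by auto
      have s0: "(cstep ?W)\<^sup>*\<^sup>* (0, S i) (length B1, X i)"
        using reaches_embed[OF r1, of "[]"] by (simp add: dl_def)
      have s1: "cstep ?W (length B1, X i) (Suc (length B1), (X i)(t := X i t - 1))"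
        using nz by (simp add: cstep_def dl_def nth_append)
      have s2: "(cstep ?W)\<^sup>*\<^sup>* (Suc (length B1), (X i)(t := X i t - 1)) (Suc (length B1) + length B2, S (Suc i))"
        using reaches_embed[OF r2, of "B1 @ [Dec t (length B1 + length B2 + 2)]" "[Dec 1 0]"] by (simp add: dl_def)
      have s3: "cstep ?W (Suc (length B1) + length B2, S (Suc i)) (0, S (Suc i))"
        using z by (simp add: cstep_def dl_def nth_append)
      have s4: "(cstep ?W)\<^sup>*\<^sup>* (0, S (Suc i)) (length ?W, X n)"
        using Suc.IH im by auto
      show "(cstep ?W)\<^sup>*\<^sup>* (0, S i) (length ?W, X n)"
        using s0 s1 s2 s3 s4 by (meson converse_rtranclp_into_rtranclp rtranclp_trans rtranclp.rtrancl_into_rtrancl)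
    qed
  qed
  then show ?thesis unfolding reaches_def by auto
qed


lemma reaches_eq: "reaches p s s1 \<Longrightarrow> s1 = s2 \<Longrightarrow> reaches p s s2" by simp

definition clr :: "nat \<Rightarrow> instr list" where "clr r = whl r []"
definition mov :: "nat \<Rightarrow> nat \<Rightarrow> instr list" where "mov a d = whl a [Inc d]"
definition cpy :: "nat \<Rightarrow> nat \<Rightarrow> nat \<Rightarrow> instr list" where
  "cpy a d t = whl a ([Inc d] \<bullet> [Inc t]) \<bullet> mov t a"

lemma reaches_clr:
  assumes "r \<noteq> 1" "s 1 = 0"
  shows "reaches (clr r) s (s(r := 0))"
proof -
  let ?S = "\<lambda>i. s(r := s r - i)"
  have "reaches (whl r []) (?S 0) (?S (s r))"
  proof (rule whl_run)
    fix i assume i: "i < s r"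
    have "(?S i)(r := ?S i r - 1) = ?S (Suc i)" by (intro ext) simp
    then show "?S i r \<noteq> 0 \<and> reaches [] ((?S i)(r := ?S i r - 1)) (?S (Suc i)) \<and> ?S (Suc i) 1 = 0"
      using i assms by simp
  qed simp
  then show ?thesis by (simp add: clr_def)
qed

lemma reaches_Inc': "s' = s(r := Suc (s r)) \<Longrightarrow> reaches [Inc r] s s'"
  using reaches_Inc by simp

lemma reaches_mov:
  assumes "a \<noteq> 1" "d \<noteq> 1" "a \<noteq> d" "s 1 = 0"
  shows "reaches (mov a d) s (s(a := 0, d := s d + s a))"
proof -
  let ?S = "\<lambda>i. s(a := s a - i, d := s d + i)"
  have "reaches (whl a [Inc d]) (?S 0) (?S (s a))"
  proof (rule whl_run)
    fix i assume i: "i < s a"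
    have e: "((?S i)(a := ?S i a - 1))(d := Suc (((?S i)(a := ?S i a - 1)) d)) = ?S (Suc i)"
      using assms i by (intro ext) simp
    show "?S i a \<noteq> 0 \<and> reaches [Inc d] ((?S i)(a := ?S i a - 1)) (?S (Suc i)) \<and> ?S (Suc i) 1 = 0"
      using assms i reaches_Inc[of d "(?S i)(a := ?S i a - 1)"] e by simp
  qed (use assms in simp)
  then show ?thesis using assms by (simp add: mov_def)
qed

lemma reaches_cpy:
  assumes "a \<noteq> 1" "d \<noteq> 1" "t \<noteq> 1" "a \<noteq> d" "a \<noteq> t" "d \<noteq> t" "s 1 = 0" "s t = 0"
  shows "reaches (cpy a d t) s (s(d := s d + s a))"
proof -
  let ?S = "\<lambda>i. s(a := s a - i, d := s d + i, t := i)"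
  have "reaches (whl a ([Inc d] \<bullet> [Inc t])) (?S 0) (?S (s a))"
  proof (rule whl_run)
    fix i assume i: "i < s a"
    let ?X = "(?S i)(a := ?S i a - 1)"
    have r: "reaches ([Inc d] \<bullet> [Inc t]) ?X (?X(d := Suc (?X d), t := Suc ((?X(d := Suc (?X d))) t)))"
      by (rule reaches_sq[OF reaches_Inc reaches_Inc])
    have e: "?X(d := Suc (?X d), t := Suc ((?X(d := Suc (?X d))) t)) = ?S (Suc i)"
      using assms i by (intro ext) simp
    show "?S i a \<noteq> 0 \<and> reaches ([Inc d] \<bullet> [Inc t]) ?X (?S (Suc i)) \<and> ?S (Suc i) 1 = 0"
      using assms i r e by simp
  qed (use assms in simp)
  moreover have "?S 0 = s" using assms by (intro ext) simp
  moreover have "?S (s a) = s(a := 0, d := s d + s a, t := s a)" using assms by (intro ext) simp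
  ultimately have 1: "reaches (whl a ([Inc d] \<bullet> [Inc t])) s (s(a := 0, d := s d + s a, t := s a))"
    by simp
  have 2: "reaches (mov t a) (s(a := 0, d := s d + s a, t := s a)) (s(d := s d + s a))"
  proof (rule reaches_eq[OF reaches_mov])
    show "(s(a := 0, d := s d + s a, t := s a))(t := 0, a := (s(a := 0, d := s d + s a, t := s a)) a + (s(a := 0, d := s d + s a, t := s a)) t) = s(d := s d + s a)"
      using assms by (intro ext) simp
  qed (use assms in simp_all)
  show ?thesis unfolding cpy_def by (rule reaches_sq[OF 1 2])
qed

definition clrs :: "nat list \<Rightarrow> instr list" where "clrs rs = foldr (\<lambda>r p. clr r \<bullet> p) rs []"

lemma reaches_clrs:
  assumes "1 \<notin> set rs" "s 1 = 0"
  shows "reaches (clrs rs) s (\<lambda>r. if r \<in> set rs then 0 else s r)"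
  using assms
proof (induction rs arbitrary: s)
  case Nil then show ?case by (simp add: clrs_def)
next
  case (Cons r rs)
  have 1: "reaches (clr r) s (s(r := 0))" using Cons.prems by (intro reaches_clr) auto
  have 2: "reaches (clrs rs) (s(r:=0)) (\<lambda>x. if x \<in> set rs then 0 else (s(r:=0)) x)"
    using Cons by auto
  have e: "(\<lambda>x. if x \<in> set rs then 0 else (s(r:=0)) x) = (\<lambda>x. if x \<in> set (r # rs) then 0 else s x)"
    by (intro ext) simp
  show ?case using reaches_sq[OF 1 2] e by (simp add: clrs_def)
qed

function (sequential) comp :: "recf \<Rightarrow> nat list \<Rightarrow> nat \<Rightarrow> nat \<Rightarrow> instr list"
and comps :: "recf list \<Rightarrow> nat list \<Rightarrow> nat \<Rightarrow> nat \<Rightarrow> instr list" where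
  "comp Zr ins ou b = []"
| "comp Sc ins ou b = cpy (hd ins) ou b \<bullet> [Inc ou]"
| "comp (Id n k) ins ou b = cpy (ins ! k) ou b"
| "comp (Cn n f gs) ins ou b =
     comps gs ins b (b + length gs) \<bullet> comp f [b..<b + length gs] ou (b + length gs) \<bullet> clrs [b..<b + length gs]"
| "comp (Pr n f g) ins ou b =
     comp f (tl ins) b (b+5) \<bullet> cpy (hd ins) (b+2) (b+4) \<bullet>
     whl (b+2) (comp g ((b+1) # b # tl ins) (b+3) (b+5) \<bullet> clr b \<bullet> mov (b+3) b \<bullet> [Inc (b+1)]) \<bullet>
     mov b ou \<bullet> clr (b+1)"
| "comp (Mn n f) ins ou b = dl (comp f (b # ins) (b+1) (b+2)) (b+1) (clr (b+1) \<bullet> [Inc b]) \<bullet> mov b ou"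
| "comps [] ins k B = []"
| "comps (g # gs) ins k B = comp g ins k B \<bullet> comps gs ins (Suc k) B"
  by pat_completeness auto
termination
  by (relation "measure (case_sum (\<lambda>(g,_). size g) (\<lambda>(gs,_). size_list size gs))") auto


definition OK :: "recf \<Rightarrow> bool" where
  "OK g \<longleftrightarrow> (\<forall>xs y ins ou b s. rec_eval g xs y \<longrightarrow> 1 \<notin> set ins \<longrightarrow> ou \<noteq> 1 \<longrightarrow> ou \<notin> set ins \<longrightarrow>
      (\<forall>r\<in>set ins. r < b) \<longrightarrow> ou < b \<longrightarrow> 1 < b \<longrightarrow> s 1 = 0 \<longrightarrow> s ou = 0 \<longrightarrow> (\<forall>r\<ge>b. s r = 0) \<longrightarrow>
      map s ins = xs \<longrightarrow> reaches (comp g ins ou b) s (s(ou := y)))"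

lemma OKD:
  assumes "OK g" "rec_eval g xs y" "1 \<notin> set ins" "ou \<noteq> 1" "ou \<notin> set ins"
      "\<forall>r\<in>set ins. r < b" "ou < b" "1 < b" "s 1 = 0" "s ou = 0" "\<forall>r\<ge>b. s r = 0"
      "map s ins = xs"
  shows "reaches (comp g ins ou b) s (s(ou := y))"
  using assms unfolding OK_def by blast

lemma OKI:
  assumes "\<And>xs y ins ou b s. rec_eval g xs y \<Longrightarrow> 1 \<notin> set ins \<Longrightarrow> ou \<noteq> 1 \<Longrightarrow> ou \<notin> set ins \<Longrightarrow>
      (\<forall>r\<in>set ins. r < b) \<Longrightarrow> ou < b \<Longrightarrow> 1 < b \<Longrightarrow> s 1 = 0 \<Longrightarrow> s ou = 0 \<Longrightarrow> (\<forall>r\<ge>b. s r = 0) \<Longrightarrow>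
      map s ins = xs \<Longrightarrow> reaches (comp g ins ou b) s (s(ou := y))"
  shows "OK g"
  using assms unfolding OK_def by blast

inductive_cases ev_ZrE: "rec_eval Zr xs y"
inductive_cases ev_ScE: "rec_eval Sc xs y"
inductive_cases ev_IdE: "rec_eval (Id n k) xs y"
inductive_cases ev_CnE: "rec_eval (Cn n f gs) xs y"
inductive_cases ev_PrE: "rec_eval (Pr n f g) xs y"
inductive_cases ev_MnE: "rec_eval (Mn n f) xs y"

lemma OK_Zr: "OK Zr"
proof (rule OKI)
  fix xs y ins and ou b :: nat and s :: regs
  assume "rec_eval Zr xs y" "s ou = 0"
  then show "reaches (comp Zr ins ou b) s (s(ou := y))"
    by (auto elim: ev_ZrE simp: fun_upd_idem)
qed

lemma OK_Sc: "OK Sc"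
proof (rule OKI)
  fix xs y ins and ou b :: nat and s :: regs
  assume ev: "rec_eval Sc xs y" and h: "1 \<notin> set ins" "ou \<noteq> 1" "ou \<notin> set ins"
      "\<forall>r\<in>set ins. r < b" "ou < b" "1 < b" "s 1 = 0" "s ou = 0" "\<forall>r\<ge>b. s r = 0"
      "map s ins = xs"
  from ev obtain x where xs: "xs = [x]" and y: "y = Suc x" by (auto elim: ev_ScE)
  then obtain r where ins: "ins = [r]" and sr: "s r = x" using h(10) by (cases ins) auto
  have sb: "s b = 0" using h(9) by simp
  have 1: "reaches (cpy r ou b) s (s(ou := s ou + s r))"
    by (rule reaches_cpy) (use h ins sb in auto)
  have 2: "reaches [Inc ou] (s(ou := s ou + s r)) (s(ou := y))"
    by (rule reaches_Inc') (use h sr y in simp)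
  show "reaches (comp Sc ins ou b) s (s(ou := y))"
    using reaches_sq[OF 1 2] ins by simp
qed

lemma OK_Id: "OK (Id n k)"
proof (rule OKI)
  fix xs y ins and ou b :: nat and s :: regs
  assume ev: "rec_eval (Id n k) xs y" and h: "1 \<notin> set ins" "ou \<noteq> 1" "ou \<notin> set ins"
      "\<forall>r\<in>set ins. r < b" "ou < b" "1 < b" "s 1 = 0" "s ou = 0" "\<forall>r\<ge>b. s r = 0"
      "map s ins = xs"
  from ev have k: "k < length xs" and y: "y = xs ! k" by (auto elim: ev_IdE)
  have kl: "k < length ins" using k h(10) by auto
  have mem: "ins ! k \<in> set ins" using kl by simp
  have sb: "s b = 0" using h(9) by simp
  have 1: "reaches (cpy (ins ! k) ou b) s (s(ou := s ou + s (ins ! k)))"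
    by (rule reaches_cpy) (use h mem sb in \<open>auto\<close>)
  have "s (ins ! k) = y" using y h(10) kl by auto
  then show "reaches (comp (Id n k) ins ou b) s (s(ou := y))" using 1 h by simp
qed

definition setr :: "regs \<Rightarrow> nat \<Rightarrow> nat list \<Rightarrow> regs" where
  "setr s k ys = (\<lambda>r. if k \<le> r \<and> r < k + length ys then ys ! (r - k) else s r)"

lemma comps_run:
  assumes "list_all2 (\<lambda>g y. rec_eval g xs y) gs ys" "\<forall>g\<in>set gs. OK g"
    "1 \<notin> set ins" "\<forall>r\<in>set ins. r < k" "1 < k" "k + length gs \<le> B" "s 1 = 0" "\<forall>r\<ge>k. s r = 0"
    "map s ins = xs"
  shows "reaches (comps gs ins k B) s (setr s k ys)"
  using assms
proof (induction gs ys arbitrary: s k rule: list_all2_induct)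
  case Nil
  have "setr s k [] = s" by (intro ext) (simp add: setr_def)
  then show ?case by simp
next
  case (Cons g gs y ys)
  have sk: "s k = 0" using Cons.prems(7) by simp
  have kin: "k \<notin> set ins" using Cons.prems(3) by auto
  have 1: "reaches (comp g ins k B) s (s(k := y))"
  proof (rule OKD[where xs=xs])
    show "OK g" using Cons.prems(1) by simp
    show "\<forall>r\<in>set ins. r < B" using Cons.prems(3,5) by force
  qed (use Cons sk kin in auto)
  have 2: "reaches (comps gs ins (Suc k) B) (s(k := y)) (setr (s(k := y)) (Suc k) ys)"
  proof (rule Cons.IH)
    show "map (s(k := y)) ins = xs" using Cons.prems(8) kin by (auto intro: map_idI)
  qed (use Cons.prems in auto)
  have e: "setr (s(k := y)) (Suc k) ys = setr s k (y # ys)"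
  proof (intro ext)
    fix r
    show "setr (s(k := y)) (Suc k) ys r = setr s k (y # ys) r"
      by (cases "r < k"; cases "r = k") (auto simp: setr_def nth_Cons')
  qed
  show ?case using reaches_sq[OF 1 2] e by simp
qed

lemma OK_Cn:
  assumes okf: "OK f" and okg: "\<forall>g\<in>set gs. OK g"
  shows "OK (Cn n f gs)"
proof (rule OKI)
  fix xs z ins and ou b :: nat and s :: regs
  assume ev: "rec_eval (Cn n f gs) xs z" and h: "1 \<notin> set ins" "ou \<noteq> 1" "ou \<notin> set ins"
      "\<forall>r\<in>set ins. r < b" "ou < b" "1 < b" "s 1 = 0" "s ou = 0" "\<forall>r\<ge>b. s r = 0"
      "map s ins = xs"
  from ev obtain ys where la: "list_all2 (\<lambda>g y. rec_eval g xs y) gs ys" and evf: "rec_eval f ys z"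
    by (auto elim: ev_CnE)
  define B where "B = b + length gs"
  have ly: "length ys = length gs" using la by (simp add: list_all2_lengthD)
  define s' where "s' = setr s b ys"
  have 1: "reaches (comps gs ins b B) s s'"
    unfolding s'_def by (rule comps_run[OF la okg]) (use h B_def in auto)
  have s'o: "s' ou = 0" using h by (simp add: s'_def setr_def)
  have s'1: "s' 1 = 0" unfolding s'_def setr_def using h(6,7) by simp
  have s'B: "\<forall>r\<ge>B. s' r = 0" using h ly by (simp add: s'_def setr_def B_def)
  have mp: "map s' [b..<B] = ys"
    by (rule nth_equalityI) (auto simp: s'_def setr_def B_def ly)
  have 2: "reaches (comp f [b..<B] ou B) s' (s'(ou := z))"
    by (rule OKD[OF okf evf]) (use h s'o s'1 s'B mp B_def in auto)
  have 3: "reaches (clrs [b..<B]) (s'(ou := z)) (\<lambda>r. if r \<in> set [b..<B] then 0 else (s'(ou := z)) r)"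
    by (rule reaches_clrs) (use h s'1 in auto)
  have e: "(\<lambda>r. if r \<in> set [b..<B] then 0 else (s'(ou := z)) r) = s(ou := z)"
  proof (intro ext)
    fix r show "(if r \<in> set [b..<B] then 0 else (s'(ou := z)) r) = (s(ou := z)) r"
      using h by (auto simp: s'_def setr_def B_def ly)
  qed
  show "reaches (comp (Cn n f gs) ins ou b) s (s(ou := z))"
    using reaches_sq[OF 1 reaches_sq[OF 2 3]] e B_def by simp
qed

lemma pr_chain:
  "rec_eval (Pr n f g) (x # xs) y \<Longrightarrow>
    \<exists>P. P x = y \<and> rec_eval f xs (P 0) \<and> (\<forall>j<x. rec_eval g (j # P j # xs) (P (Suc j)))"
proof (induction x arbitrary: y)
  case 0
  then have "rec_eval f xs y" by (auto elim: ev_PrE)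
  then show ?case by (intro exI[of _ "\<lambda>_. y"]) auto
next
  case (Suc x)
  from Suc.prems obtain y' where a: "rec_eval (Pr n f g) (x # xs) y'" and b: "rec_eval g (x # y' # xs) y"
    by (auto elim: ev_PrE)
  from Suc.IH[OF a] obtain P where P: "P x = y'" "rec_eval f xs (P 0)"
    "\<forall>j<x. rec_eval g (j # P j # xs) (P (Suc j))" by blast
  show ?case
  proof (intro exI[of _ "P(Suc x := y)"] conjI allI impI)
    fix j assume "j < Suc x"
    then show "rec_eval g (j # (P(Suc x := y)) j # xs) ((P(Suc x := y)) (Suc j))"
      using P b by (cases "j = x") auto
  qed (use P in auto)
qed

lemma OK_Pr:
  assumes okf: "OK f" and okg: "OK g"
  shows "OK (Pr n f g)"
proof (rule OKI)
  fix xs y ins and ou b :: nat and s :: regs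
  assume ev: "rec_eval (Pr n f g) xs y" and h: "1 \<notin> set ins" "ou \<noteq> 1" "ou \<notin> set ins"
      "\<forall>r\<in>set ins. r < b" "ou < b" "1 < b" "s 1 = 0" "s ou = 0" "\<forall>r\<ge>b. s r = 0"
      "map s ins = xs"
  from ev obtain x xs' where xs: "xs = x # xs'" by (auto elim: ev_PrE)
  with h(10) obtain r ins' where ins: "ins = r # ins'" and sr: "s r = x" and mp: "map s ins' = xs'"
    by (cases ins) auto
  from pr_chain[OF ev[unfolded xs]] obtain P where P: "P x = y" "rec_eval f xs' (P 0)"
    "\<forall>j<x. rec_eval g (j # P j # xs') (P (Suc j))" by blast
  have z: "s b = 0" "s (b+1) = 0" "s (b+2) = 0" "s (b+3) = 0" "s (b+4) = 0" "\<forall>q\<ge>b+5. s q = 0"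
    using h(9) by auto
  have rb: "r < b" "\<forall>q\<in>set ins'. q < b" "1 \<notin> set ins'" "r \<noteq> 1" using h(1,4) ins by auto
  define s1 where "s1 = s(b := P 0)"
  have R1: "reaches (comp f ins' b (b+5)) s s1"
    unfolding s1_def by (rule OKD[OF okf P(2)]) (use h z rb mp in auto)
  define S where "S = (\<lambda>j. s(b := P j, b+1 := j, b+2 := x - j))"
  have R2: "reaches (cpy r (b+2) (b+4)) s1 (S 0)"
  proof (rule reaches_eq[OF reaches_cpy])
    show "s1(b + 2 := s1 (b + 2) + s1 r) = S 0"
      using rb z sr by (intro ext) (simp add: s1_def S_def)
  qed (use rb h z in \<open>auto simp: s1_def\<close>)
  have R3: "reaches (whl (b+2) (comp g ((b+1) # b # ins') (b+3) (b+5) \<bullet> clr b \<bullet> mov (b+3) b \<bullet> [Inc (b+1)]))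
           (S 0) (S x)"
  proof (rule whl_run)
    fix j assume j: "j < x"
    define X where "X = s(b := P j, b+1 := j, b+2 := x - Suc j)"
    have X: "(S j)(b+2 := S j (b+2) - 1) = X" by (intro ext) (simp add: S_def X_def)
    have G: "reaches (comp g ((b+1) # b # ins') (b+3) (b+5)) X (X(b+3 := P (Suc j)))"
    proof (rule OKD[OF okg])
      show "rec_eval g (map X ((b+1) # b # ins')) (P (Suc j))"
      proof -
        have "map X ins' = map s ins'" using rb(2) by (intro map_cong) (auto simp: X_def)
        then have "map X ins' = xs'" using mp by simp
        then show ?thesis using P(3) j by (simp add: X_def)
      qed
    qed (use h z rb in \<open>auto simp: X_def\<close>)
    have C: "reaches (clr b) (X(b+3 := P (Suc j))) (X(b+3 := P (Suc j), b := 0))"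
      by (rule reaches_clr) (use h z in \<open>auto simp: X_def\<close>)
    have M: "reaches (mov (b+3) b) (X(b+3 := P (Suc j), b := 0)) (X(b := P (Suc j)))"
    proof (rule reaches_eq[OF reaches_mov])
      show "(X(b+3 := P (Suc j), b := 0))(b + 3 := 0, b := (X(b+3 := P (Suc j), b := 0)) b + (X(b+3 := P (Suc j), b := 0)) (b + 3)) =
        X(b := P (Suc j))"
        using z by (intro ext) (simp add: X_def)
    qed (use h z in \<open>auto simp: X_def\<close>)
    have I: "reaches [Inc (b+1)] (X(b := P (Suc j))) (S (Suc j))"
      by (rule reaches_Inc') (intro ext, simp add: X_def S_def)
    show "S j (b+2) \<noteq> 0 \<and> reaches (comp g ((b+1) # b # ins') (b+3) (b+5) \<bullet> clr b \<bullet> mov (b+3) b \<bullet> [Inc (b+1)])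
        ((S j)(b+2 := S j (b+2) - 1)) (S (Suc j)) \<and> S (Suc j) 1 = 0"
      using j X reaches_sq[OF G reaches_sq[OF C reaches_sq[OF M I]]] h z by (simp add: S_def)
  qed (simp add: S_def)
  have R4: "reaches (mov b ou) (S x) (s(ou := y, b+1 := x))"
  proof (rule reaches_eq[OF reaches_mov])
    show "(S x)(b := 0, ou := S x ou + S x b) = s(ou := y, b+1 := x)"
      using h z P(1) by (intro ext) (auto simp: S_def)
  qed (use h z in \<open>auto simp: S_def\<close>)
  have R5: "reaches (clr (b+1)) (s(ou := y, b+1 := x)) (s(ou := y))"
  proof (rule reaches_eq[OF reaches_clr])
    show "(s(ou := y, b+1 := x))(b+1 := 0) = s(ou := y)"
      using h z by (intro ext) auto
  qed (use h in auto)
  have "comp (Pr n f g) ins ou b = comp f ins' b (b+5) \<bullet> cpy r (b+2) (b+4) \<bullet>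
     whl (b+2) (comp g ((b+1) # b # ins') (b+3) (b+5) \<bullet> clr b \<bullet> mov (b+3) b \<bullet> [Inc (b+1)]) \<bullet>
     mov b ou \<bullet> clr (b+1)" using ins by simp
  then show "reaches (comp (Pr n f g) ins ou b) s (s(ou := y))"
    using reaches_sq[OF R1 reaches_sq[OF R2 reaches_sq[OF R3 reaches_sq[OF R4 R5]]]] by simp
qed

lemma OK_Mn:
  assumes okf: "OK f"
  shows "OK (Mn n f)"
proof (rule OKI)
  fix xs r ins and ou b :: nat and s :: regs
  assume ev: "rec_eval (Mn n f) xs r" and h: "1 \<notin> set ins" "ou \<noteq> 1" "ou \<notin> set ins"
      "\<forall>r\<in>set ins. r < b" "ou < b" "1 < b" "s 1 = 0" "s ou = 0" "\<forall>r\<ge>b. s r = 0"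
      "map s ins = xs"
  from ev have f0: "rec_eval f (r # xs) 0" and fi: "\<forall>i<r. \<exists>y. rec_eval f (i # xs) y \<and> y \<noteq> 0"
    by (auto elim: ev_MnE)
  define Y where "Y = (\<lambda>i. if i < r then (SOME y. rec_eval f (i # xs) y \<and> y \<noteq> 0) else 0)"
  have Y: "i < r \<Longrightarrow> rec_eval f (i # xs) (Y i) \<and> Y i \<noteq> 0" for i
  proof -
    assume i: "i < r"
    have "\<exists>y. rec_eval f (i # xs) y \<and> y \<noteq> 0" using fi i by blast
    from someI_ex[OF this] show ?thesis using i unfolding Y_def by simp
  qed
  have Yr: "rec_eval f (r # xs) (Y r)" using f0 by (simp add: Y_def)
  have z: "s b = 0" "s (b+1) = 0" "\<forall>q\<ge>b+2. s q = 0" using h(9) by auto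
  define S where "S = (\<lambda>i. s(b := i))"
  define X where "X = (\<lambda>i. s(b := i, b+1 := Y i))"
  have B1: "reaches (comp f (b # ins) (b+1) (b+2)) (S i) (X i)" if "rec_eval f (i # xs) (Y i)" for i
  proof (rule reaches_eq[OF OKD[OF okf]])
    show "rec_eval f (map (S i) (b # ins)) (Y i)"
    proof -
      have "map (S i) ins = map s ins" using h(4) by (intro map_cong) (auto simp: S_def)
      then show ?thesis using that h(10) by (simp add: S_def)
    qed
  qed (use h z in \<open>auto simp: S_def X_def\<close>)
  have "reaches (dl (comp f (b # ins) (b+1) (b+2)) (b+1) (clr (b+1) \<bullet> [Inc b])) (S 0) (X r)"
  proof (rule dl_run)
    fix i assume i: "i < r"
    have C: "reaches (clr (b+1)) ((X i)(b+1 := X i (b+1) - 1)) (S i)"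
    proof (rule reaches_eq[OF reaches_clr])
      show "((X i)(b+1 := X i (b+1) - 1))(b+1 := 0) = S i" using z by (intro ext) (simp add: X_def S_def)
    qed (use h in \<open>auto simp: X_def\<close>)
    have I: "reaches [Inc b] (S i) (S (Suc i))"
      by (rule reaches_Inc') (intro ext, simp add: S_def)
    show "X i (b+1) \<noteq> 0 \<and> reaches (comp f (b # ins) (b+1) (b+2)) (S i) (X i) \<and>
        reaches (clr (b+1) \<bullet> [Inc b]) ((X i)(b+1 := X i (b+1) - 1)) (S (Suc i)) \<and> S (Suc i) 1 = 0"
      using Y[OF i] B1 reaches_sq[OF C I] h by (simp add: X_def S_def)
  next
    show "reaches (comp f (b # ins) (b+1) (b+2)) (S r) (X r)" using B1[OF Yr] .
    show "X r (b+1) = 0" by (simp add: X_def Y_def)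
  qed
  moreover have "S 0 = s" using z by (intro ext) (simp add: S_def)
  moreover have "reaches (mov b ou) (X r) (s(ou := r))"
  proof (rule reaches_eq[OF reaches_mov])
    show "(X r)(b := 0, ou := X r ou + X r b) = s(ou := r)"
      using h z by (intro ext) (auto simp: X_def Y_def)
  qed (use h in \<open>auto simp: X_def\<close>)
  ultimately show "reaches (comp (Mn n f) ins ou b) s (s(ou := r))"
    by (simp add: reaches_sq)
qed

lemma OK_all: "OK g"
proof (induction g)
  case Zr then show ?case by (rule OK_Zr)
next
  case Sc then show ?case by (rule OK_Sc)
next
  case (Id n k) then show ?case by (rule OK_Id)
next
  case (Cn n f gs) then show ?case by (intro OK_Cn) auto
next
  case (Pr n f g) then show ?case by (intro OK_Pr) auto
next
  case (Mn n f) then show ?case by (intro OK_Mn) auto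
qed


lemma rep_EndN: "replicate k One1 @ EndN # x = replicate k' One1 @ EndN # y \<Longrightarrow> k = k' \<and> x = y"
proof (induction k arbitrary: k')
  case 0 then show ?case by (cases k') auto
next
  case (Suc k) then show ?case by (cases k') auto
qed

lemma enc_state_pref: "enc_state p @ x = enc_state p' @ y \<Longrightarrow> p = p' \<and> x = y"
proof -
  assume h: "enc_state p @ x = enc_state p' @ y"
  obtain k r where p: "p = (k, r)" by (cases p)
  obtain k' r' where p': "p' = (k', r')" by (cases p')
  from h have "(if r then SR else ST) = (if r' then SR else ST)" and
    t: "replicate k One1 @ EndN # x = replicate k' One1 @ EndN # y" by (auto simp: p p')
  then have "r = r'" by (auto split: if_splits)
  with rep_EndN[OF t] show ?thesis by (simp add: p p')
qed

lemma enc_move_inj: "enc_move d = enc_move d' \<Longrightarrow> d = d'"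
  by (cases d; cases d') auto

lemma enc_tuple_pref: "enc_tuple t @ x = enc_tuple t' @ y \<Longrightarrow> t = t' \<and> x = y"
proof -
  assume h: "enc_tuple t @ x = enc_tuple t' @ y"
  obtain p a q b d where t: "t = (p, a, q, b, d)" by (cases t) auto
  obtain p' a' q' b' d' where t': "t' = (p', a', q', b', d')" by (cases t') auto
  from h have "enc_state p @ (a # enc_state q @ b # enc_move d # x) = enc_state p' @ (a' # enc_state q' @ b' # enc_move d' # y)"
    by (simp add: t t')
  from enc_state_pref[OF this] have 1: "p = p'" "a = a'" and
    "enc_state q @ (b # enc_move d # x) = enc_state q' @ (b' # enc_move d' # y)" by auto
  from enc_state_pref[OF this(3)] have "q = q'" "b = b'" "enc_move d = enc_move d'" "x = y" by auto
  with 1 enc_move_inj show ?thesis by (simp add: t t')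
qed

lemma enc_tuple_ne: "enc_tuple t \<noteq> []"
  by (cases t) auto

lemma decode_unique: "concat (map enc_tuple ts) = concat (map enc_tuple ts') \<Longrightarrow> ts = ts'"
proof (induction ts arbitrary: ts')
  case Nil then show ?case by (cases ts') (auto simp: enc_tuple_ne)
next
  case (Cons t ts)
  show ?case
  proof (cases ts')
    case Nil then show ?thesis using Cons.prems enc_tuple_ne by auto
  next
    case (Cons t' ts'')
    with Cons.prems have "enc_tuple t @ concat (map enc_tuple ts) = enc_tuple t' @ concat (map enc_tuple ts'')" by simp
    from enc_tuple_pref[OF this] Cons.IH Cons show ?thesis by auto
  qed
qed

lemma has_tuple_proper:
  assumes "proper_code w" "has_tuple w (p, a, q, b, d)" "has_tuple w (p, a, q', b', d')"
  shows "q = q' \<and> b = b' \<and> d = d'"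
proof -
  from assms(1) obtain ts where ts: "w = concat (map enc_tuple ts)" "functional_tuples ts"
    by (auto simp: proper_code_def)
  from assms(2) obtain ts1 where 1: "w = concat (map enc_tuple ts1)" "(p, a, q, b, d) \<in> set ts1"
    by (auto simp: has_tuple_def)
  from assms(3) obtain ts2 where 2: "w = concat (map enc_tuple ts2)" "(p, a, q', b', d') \<in> set ts2"
    by (auto simp: has_tuple_def)
  have "ts1 = ts" "ts2 = ts" using decode_unique ts(1) 1(1) 2(1) by metis+
  with 1 2 ts(2) show ?thesis unfolding functional_tuples_def by fastforce
qed

lemma step_det: "proper_code w \<Longrightarrow> step w c c1 \<Longrightarrow> step w c c2 \<Longrightarrow> c1 = c2"
  unfolding step_def
  by (auto split: prod.splits if_splits dest: has_tuple_proper)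

lemma det_comparable:
  assumes det: "\<forall>x y z. R x y \<longrightarrow> R x z \<longrightarrow> y = z"
  shows "R\<^sup>*\<^sup>* a b \<Longrightarrow> R\<^sup>*\<^sup>* a c \<Longrightarrow> R\<^sup>*\<^sup>* b c \<or> R\<^sup>*\<^sup>* c b"
proof (induction arbitrary: c rule: converse_rtranclp_induct)
  case base then show ?case by simp
next
  case (step a a')
  from step.prems show ?case
  proof (cases rule: converse_rtranclpE)
    case base then show ?thesis using step.hyps(1,2) by (meson converse_rtranclp_into_rtranclp)
  next
    case (step a'')
    with det \<open>R a a'\<close> have "a'' = a'" by blast
    with step.IH step show ?thesis by blast
  qed
qed

lemma first_q1_unique:
  assumes pc: "proper_code w"
    and p1: "(step_nq w)\<^sup>*\<^sup>* c0 c1" "step w c1 (q1, i1, o1)"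
    and p2: "(step_nq w)\<^sup>*\<^sup>* c0 c2" "step w c2 (q1, i2, o2)"
  shows "o2 = o1"
proof -
  have det: "\<forall>x y z. step_nq w x y \<longrightarrow> step_nq w x z \<longrightarrow> y = z"
    unfolding step_nq_def using step_det[OF pc] by blast
  have key: "c = c'" if "(step_nq w)\<^sup>*\<^sup>* c c'" "step w c (q1, i, o')" for c c' i o'
    using that(1)
  proof (cases rule: converse_rtranclpE)
    case (step y)
    then have "step w c y" "fst y \<noteq> q1" by (auto simp: step_nq_def)
    from step_det[OF pc that(2) this(1)] this(2) show ?thesis by auto
  qed simp
  from det_comparable[of "step_nq w", OF det p1(1) p2(1)] have "c1 = c2"
    using key p1(2) p2(2) by metis
  with step_det[OF pc p1(2)] p2(2) have "(q1, i1, o1) = (q1, i2, o2)" by simp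
  then show ?thesis by simp
qed

lemma stuck_no_q1:
  assumes pc: "proper_code w"
    and p1: "(step_nq w)\<^sup>*\<^sup>* c0 c1" "\<And>c'. \<not> step w c1 c'"
    and p2: "(step_nq w)\<^sup>*\<^sup>* c0 c2" "step w c2 (q1, i2, o2)"
  shows False
proof -
  have det: "\<forall>x y z. step_nq w x y \<longrightarrow> step_nq w x z \<longrightarrow> y = z"
    unfolding step_nq_def using step_det[OF pc] by blast
  from det_comparable[of "step_nq w", OF det p1(1) p2(1)] show False
  proof
    assume "(step_nq w)\<^sup>*\<^sup>* c1 c2"
    then show False
    proof (cases rule: converse_rtranclpE)
      case base then show False using p1(2) p2(2) by blast
    next
      case (step y) then show False using p1(2) by (auto simp: step_nq_def)
    qed
  next
    assume "(step_nq w)\<^sup>*\<^sup>* c2 c1"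
    then show False
    proof (cases rule: converse_rtranclpE)
      case base then show False using p1(2) p2(2) by blast
    next
      case (step y)
      then have "step w c2 y" "fst y \<noteq> q1" by (auto simp: step_nq_def)
      from step_det[OF pc p2(2) this(1)] this(2) show False by auto
    qed
  qed
qed

lemma has_tuple_mem: "t \<in> set ts \<Longrightarrow> has_tuple (concat (map enc_tuple ts)) t"
  by (auto simp: has_tuple_def)

lemma step_rgt:
  assumes "tape w = xs @ a # ys" "ys \<noteq> []" "has_tuple w (q, a, q', b, Rgt)" "snd q"
  shows "step w (q, length xs, out) (q', Suc (length xs), if b = Blank then out else out @ [b])"
proof -
  have "tape w ! length xs = a" using assms(1) by simp
  moreover have "move_head (length (tape w)) Rgt (length xs) = Suc (length xs)"
    using assms(1,2) by (cases ys) auto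
  ultimately show ?thesis using assms(3,4) unfolding step_def
    by (simp only: split) (rule exI[of _ a], rule exI[of _ b], rule exI[of _ Rgt], simp)
qed

lemma step_stay:
  assumes "tape w = xs @ a # ys" "has_tuple w (q, a, q', b, Stay)" "snd q"
  shows "step w (q, length xs, out) (q', length xs, if b = Blank then out else out @ [b])"
proof -
  have "tape w ! length xs = a" using assms(1) by simp
  then show ?thesis using assms(2,3) unfolding step_def
    by (simp only: split) (rule exI[of _ a], rule exI[of _ b], rule exI[of _ Stay], simp)
qed

lemma scan:
  assumes "tape w = xs @ u @ ys" "ys \<noteq> []" "\<forall>a\<in>set u. has_tuple w (q, a, q, f a, Rgt)" "snd q" "q \<noteq> q1"
  shows "(step_nq w)\<^sup>*\<^sup>* (q, length xs, out) (q, length xs + length u, out @ filter (\<lambda>b. b \<noteq> Blank) (map f u))"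
  using assms
proof (induction u arbitrary: xs out)
  case Nil then show ?case by simp
next
  case (Cons a u)
  have 1: "step_nq w (q, length xs, out) (q, Suc (length xs), if f a = Blank then out else out @ [f a])"
    using step_rgt[of w xs a "u @ ys" q q "f a" out] Cons.prems unfolding step_nq_def by auto
  have 2: "(step_nq w)\<^sup>*\<^sup>* (q, Suc (length xs), if f a = Blank then out else out @ [f a])
     (q, Suc (length xs) + length u, (if f a = Blank then out else out @ [f a]) @ filter (\<lambda>b. b \<noteq> Blank) (map f u))"
    using Cons.IH[of "xs @ [a]" "if f a = Blank then out else out @ [f a]"] Cons.prems by simp
  show ?case using converse_rtranclp_into_rtranclp[OF 1 2] by auto
qed


datatype lbl = LI nat | F1 nat | F2 nat | F3 nat | F4 nat | F5 nat | F6 nat | F7 nat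
  | RA nat nat bool | RK nat nat bool | RC nat nat bool | IK nat | IE nat | IZ nat | IV nat
  | D1 nat | D2 nat | D3 nat | D4 nat
  | H1 nat bool | H2 nat bool | H3 nat bool | H4 nat bool | LG nat bool nat
  | C0 | C1f | C1 | C2 | C3 | C4 | C5 | C6 | E2 | E3 | E4 | E5 | E6

instance lbl :: countable by countable_datatype

definition st :: "lbl \<Rightarrow> state" where "st l = (Suc (to_nat l), True)"

lemma st_inj[simp]: "st l = st l' \<longleftrightarrow> l = l'"
  by (auto simp: st_def)

lemma st_simps[simp]: "st l \<noteq> q1" "st l \<noteq> q0" "snd (st l)"
  by (auto simp: st_def q0_def q1_def)

fun areg :: "instr \<Rightarrow> nat" where "areg (Inc r) = r" | "areg (Dec r j) = r"
fun isDec :: "instr \<Rightarrow> bool" where "isDec (Inc r) = False" | "isDec (Dec r j) = True"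

definition syms0 :: "sym list" where
  "syms0 = [Z, One1, SR, ST, EndN, MvL, MvN, MvR, LEnd, REnd]"

lemma in_syms0[simp]: "a \<in> set syms0 \<longleftrightarrow> a \<noteq> Blank"
  by (cases a) (auto simp: syms0_def)

definition Jt :: "nat \<Rightarrow> tuple" where "Jt n = (q1, Z, (n, False), Z, Stay)"
definition J2t :: "nat \<Rightarrow> tuple" where "J2t n = (q1, One1, (n, False), Z, Stay)"
definition Et :: tuple where "Et = (q1, EndN, q1, Z, Stay)"
definition qtup :: "nat \<Rightarrow> tuple" where "qtup p = (q0, Z, st (LI p), Z, Stay)"
definition regt :: "nat \<Rightarrow> regs \<Rightarrow> nat \<Rightarrow> tuple" where
  "regt t s j = ((Suc j + t, False), Z, (s j, False), Z, Stay)"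

locale am =
  fixes prog :: "instr list" and K :: nat
begin

definition npc :: "nat \<Rightarrow> bool \<Rightarrow> nat" where
  "npc pc z = (case prog ! pc of Inc r \<Rightarrow> Suc pc | Dec r j \<Rightarrow> if z then j else Suc pc)"

definition QL :: "nat \<Rightarrow> nat" where "QL pc = length (enc_tuple (qtup pc))"

definition RO :: "nat \<Rightarrow> bool \<Rightarrow> sym list" where
  "RO pc z = replicate (QL pc) One1 @ [EndN, Z, MvN] @ enc_tuple (qtup (npc pc z))"

definition dlt :: "lbl \<Rightarrow> sym \<Rightarrow> (state \<times> sym \<times> move) option" where
 "dlt l a = (if a = Blank then None else case l of
   LI pc \<Rightarrow> if pc < length prog \<and> a = LEnd then Some (st (F1 pc), SR, Rgt) else None
 | F1 pc \<Rightarrow> if pc < length prog \<and> a = SR then Some (st (F2 pc), EndN, Rgt) else None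
 | F2 pc \<Rightarrow> if pc < length prog \<and> a = EndN then Some (st (F3 pc), Z, Rgt) else None
 | F3 pc \<Rightarrow> if pc < length prog \<and> a = Z then Some (st (F4 pc), ST, Rgt) else None
 | F4 pc \<Rightarrow> if pc < length prog \<and> a = ST then Some (st (F5 pc), One1, Rgt) else None
 | F5 pc \<Rightarrow> if pc < length prog \<and> a = One1 then Some (st (F5 pc), One1, Rgt)
      else if pc < length prog \<and> a = EndN then Some (st (F6 pc), EndN, Rgt) else None
 | F6 pc \<Rightarrow> if pc < length prog \<and> a = Z then Some (st (F7 pc), Z, Rgt) else None
 | F7 pc \<Rightarrow> if pc < length prog \<and> a = MvN then Some (st (RA pc 0 False), MvN, Rgt) else None
 | RA pc j z \<Rightarrow> if pc < length prog \<and> j < K \<and> a = ST then Some (st (RK pc j z), ST, Rgt)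
      else if pc < length prog \<and> j = K \<and> a = SR then Some (st (H1 pc z), SR, Rgt) else None
 | RK pc j z \<Rightarrow> if pc < length prog \<and> j < K \<and> a = One1 then
        (if j = areg (prog ! pc) then
           (if isDec (prog ! pc) then Some (st (D1 pc), One1, Rgt) else Some (st (IK pc), One1, Stay))
         else Some (st (RC pc j z), One1, Stay))
      else None
 | RC pc j z \<Rightarrow> if pc < length prog \<and> j < K \<and> a \<in> {One1, EndN, Z, ST} then Some (st (RC pc j z), a, Rgt)
      else if pc < length prog \<and> j < K \<and> a = MvN then Some (st (RA pc (Suc j) z), MvN, Rgt) else None
 | IK pc \<Rightarrow> if pc < length prog \<and> a = One1 then Some (st (IK pc), One1, Rgt)
      else if pc < length prog \<and> a = EndN then Some (st (IE pc), EndN, Rgt) else None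
 | IE pc \<Rightarrow> if pc < length prog \<and> a = Z then Some (st (IZ pc), Z, Rgt) else None
 | IZ pc \<Rightarrow> if pc < length prog \<and> a = ST then Some (st (IV pc), ST, Rgt) else None
 | IV pc \<Rightarrow> if pc < length prog \<and> a \<in> {One1, EndN} then Some (st (RC pc (areg (prog ! pc)) False), One1, Stay) else None
 | D1 pc \<Rightarrow> if pc < length prog \<and> a = One1 then Some (st (D1 pc), One1, Rgt)
      else if pc < length prog \<and> a = EndN then Some (st (D2 pc), One1, Rgt) else None
 | D2 pc \<Rightarrow> if pc < length prog \<and> a = Z then Some (st (D3 pc), EndN, Rgt) else None
 | D3 pc \<Rightarrow> if pc < length prog \<and> a = ST then Some (st (D4 pc), Z, Rgt) else None
 | D4 pc \<Rightarrow> if pc < length prog \<and> a = One1 then Some (st (RC pc (areg (prog ! pc)) False), ST, Rgt)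
      else if pc < length prog \<and> a = EndN then Some (st (RC pc (areg (prog ! pc)) True), ST, Stay) else None
 | H1 pc z \<Rightarrow> if pc < length prog \<and> a = EndN then Some (st (H2 pc z), EndN, Rgt) else None
 | H2 pc z \<Rightarrow> if pc < length prog \<and> a = One1 then Some (st (H3 pc z), One1, Rgt) else None
 | H3 pc z \<Rightarrow> if pc < length prog \<and> a = ST then Some (st (H4 pc z), ST, Rgt) else None
 | H4 pc z \<Rightarrow> if pc < length prog \<and> a = One1 then Some (st (H4 pc z), One1, Rgt)
      else if pc < length prog \<and> a = EndN then Some (st (LG pc z 1), RO pc z ! 0, Rgt) else None
 | LG pc z i \<Rightarrow> if pc < length prog \<and> 0 < i \<and> i < length (RO pc z) then
        Some (if Suc i < length (RO pc z) then st (LG pc z (Suc i)) else st C0, RO pc z ! i,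
              if i < 3 + QL pc then Rgt else Stay) else None
 | C0 \<Rightarrow> if a = SR then Some (st C1f, SR, Rgt) else None
 | C1f \<Rightarrow> if a = One1 then Some (st C1, One1, Rgt) else if a = EndN then Some (st E2, EndN, Rgt) else None
 | C1 \<Rightarrow> if a = One1 then Some (st C1, One1, Rgt) else if a = EndN then Some (st C2, EndN, Rgt) else None
 | C2 \<Rightarrow> Some (st C3, a, Rgt)
 | C3 \<Rightarrow> Some (st C4, a, Rgt)
 | C4 \<Rightarrow> if a = One1 then Some (st C4, One1, Rgt) else if a = EndN then Some (st C5, EndN, Rgt) else None
 | C5 \<Rightarrow> Some (st C6, a, Rgt)
 | C6 \<Rightarrow> Some (st C0, a, Rgt)
 | E2 \<Rightarrow> if a = EndN then Some (st E3, EndN, Rgt) else None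
 | E3 \<Rightarrow> if a = SR then Some (st E4, SR, Rgt) else None
 | E4 \<Rightarrow> if a = EndN then Some (st E5, EndN, Rgt) else None
 | E5 \<Rightarrow> if a = Z then Some (st E6, Z, Rgt) else None
 | E6 \<Rightarrow> if a = MvN then Some (q1, MvN, Stay) else None)"

definition labels :: "lbl list" where
  "labels = concat (map (\<lambda>pc. [LI pc, F1 pc, F2 pc, F3 pc, F4 pc, F5 pc, F6 pc, F7 pc, IK pc, IE pc, IZ pc, IV pc,
        D1 pc, D2 pc, D3 pc, D4 pc]
      @ concat (map (\<lambda>j. concat (map (\<lambda>z. [RA pc j z, RK pc j z, RC pc j z]) [False, True])) [0..<Suc K])
      @ concat (map (\<lambda>z. [H1 pc z, H2 pc z, H3 pc z, H4 pc z] @ map (LG pc z) [0..<length (RO pc z)]) [False, True]))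
      [0..<length prog]) @ [C0, C1f, C1, C2, C3, C4, C5, C6, E2, E3, E4, E5, E6]"

definition P :: "tuple list" where
  "P = concat (map (\<lambda>l. concat (map (\<lambda>a. case dlt l a of None \<Rightarrow> [] | Some (q', b, d) \<Rightarrow> [(st l, a, q', b, d)]) syms0)) labels)"

definition TS :: "nat \<times> nat \<times> nat \<Rightarrow> nat \<Rightarrow> regs \<Rightarrow> tuple list" where
  "TS g pc s = (case g of (tj, t, u) \<Rightarrow> [Jt tj] @ map (regt t s) [0..<K] @ [J2t u] @ [qtup pc] @ P @ [Et])"

definition code :: "nat \<times> nat \<times> nat \<Rightarrow> nat \<Rightarrow> regs \<Rightarrow> sym list" where
  "code g pc s = concat (map enc_tuple (TS g pc s))"

lemma P_mem: "t \<in> set P \<Longrightarrow> \<exists>l a q' b d. t = (st l, a, q', b, d) \<and> dlt l a = Some (q', b, d)"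
  unfolding P_def by (auto split: option.splits)

lemma P_memI:
  assumes "l \<in> set labels" "dlt l a = Some (q', b, d)"
  shows "(st l, a, q', b, d) \<in> set P"
proof -
  let ?F = "\<lambda>l a. case dlt l a of None \<Rightarrow> [] | Some (q', b, d) \<Rightarrow> [(st l, a, q', b, d)]"
  have nb: "a \<noteq> Blank" using assms(2) by (auto simp: dlt_def)
  have "(st l, a, q', b, d) \<in> set (?F l a)" using assms(2) by simp
  then have "(st l, a, q', b, d) \<in> set (concat (map (?F l) syms0))"
    using nb by (auto intro: UN_I[of a])
  then show ?thesis unfolding P_def using assms(1) by (auto intro: UN_I)
qed

lemma functional_TS: "functional_tuples (TS g pc s)"
  unfolding functional_tuples_def
proof (intro ballI impI)
  obtain tj t u where g: "g = (tj, t, u)" by (cases g) auto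
  fix t1 t2 assume t1: "t1 \<in> set (TS g pc s)" and t2: "t2 \<in> set (TS g pc s)"
    and eq: "fst t1 = fst t2 \<and> fst (snd t1) = fst (snd t2)"
  let ?O = "set ([Jt tj] @ map (regt t s) [0..<K] @ [J2t u] @ [qtup pc] @ [Et])"
  show "t1 = t2"
  proof (cases "t1 \<in> set P")
    case True
    then obtain l a q' b d where 1: "t1 = (st l, a, q', b, d)" "dlt l a = Some (q', b, d)" using P_mem by blast
    have "t2 \<in> set P" using t2 eq 1
      by (auto simp: TS_def g regt_def qtup_def Jt_def J2t_def Et_def st_def q0_def q1_def)
    then obtain l' a' q'' b' d' where 2: "t2 = (st l', a', q'', b', d')" "dlt l' a' = Some (q'', b', d')" using P_mem by blast
    from 1 2 eq show ?thesis by auto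
  next
    case False
    then have o1: "t1 \<in> ?O" using t1 by (auto simp: TS_def g)
    then have "fst t1 \<notin> fst ` set P"
      by (auto simp: regt_def qtup_def Jt_def J2t_def Et_def q0_def q1_def st_def dest!: P_mem)
    then have "t2 \<notin> set P" using eq by force
    then have "t2 \<in> ?O" using t2 by (auto simp: TS_def g)
    then show ?thesis using o1 eq by (auto simp: regt_def qtup_def Jt_def J2t_def Et_def q0_def q1_def)
  qed
qed

lemma proper_code: "proper_code (code g pc s)"
  unfolding proper_code_def code_def using functional_TS by blast

lemma has_tuple_code: "has_tuple (code g pc s) t \<longleftrightarrow> t \<in> set (TS g pc s)"
proof
  assume "has_tuple (code g pc s) t"
  then obtain ts where "code g pc s = concat (map enc_tuple ts)" "t \<in> set ts" by (auto simp: has_tuple_def)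
  moreover then have "ts = TS g pc s" using decode_unique unfolding code_def by metis
  ultimately show "t \<in> set (TS g pc s)" by simp
qed (auto simp: has_tuple_def code_def)

lemma dlt_tuple: "l \<in> set labels \<Longrightarrow> dlt l a = Some (q', b, d) \<Longrightarrow> has_tuple (code g pc s) (st l, a, q', b, d)"
  using P_memI by (cases g) (auto simp: has_tuple_code TS_def)

lemma has_tuple_st: "has_tuple (code g pc s) (st l, a, q', b, d) \<Longrightarrow> dlt l a = Some (q', b, d)"
  by (cases g) (auto simp: has_tuple_code TS_def regt_def qtup_def Jt_def J2t_def Et_def q0_def q1_def st_def dest!: P_mem)

lemma labels_mem[simp]:
  "pc < length prog \<Longrightarrow> LI pc \<in> set labels"
  "pc < length prog \<Longrightarrow> F1 pc \<in> set labels" "pc < length prog \<Longrightarrow> F2 pc \<in> set labels"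
  "pc < length prog \<Longrightarrow> F3 pc \<in> set labels" "pc < length prog \<Longrightarrow> F4 pc \<in> set labels"
  "pc < length prog \<Longrightarrow> F5 pc \<in> set labels" "pc < length prog \<Longrightarrow> F6 pc \<in> set labels"
  "pc < length prog \<Longrightarrow> F7 pc \<in> set labels"
  "pc < length prog \<Longrightarrow> IK pc \<in> set labels" "pc < length prog \<Longrightarrow> IE pc \<in> set labels"
  "pc < length prog \<Longrightarrow> IZ pc \<in> set labels" "pc < length prog \<Longrightarrow> IV pc \<in> set labels"
  "pc < length prog \<Longrightarrow> D1 pc \<in> set labels" "pc < length prog \<Longrightarrow> D2 pc \<in> set labels"
  "pc < length prog \<Longrightarrow> D3 pc \<in> set labels" "pc < length prog \<Longrightarrow> D4 pc \<in> set labels"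
  "pc < length prog \<Longrightarrow> j \<le> K \<Longrightarrow> RA pc j z \<in> set labels"
  "pc < length prog \<Longrightarrow> j \<le> K \<Longrightarrow> RK pc j z \<in> set labels"
  "pc < length prog \<Longrightarrow> j \<le> K \<Longrightarrow> RC pc j z \<in> set labels"
  "pc < length prog \<Longrightarrow> H1 pc z \<in> set labels" "pc < length prog \<Longrightarrow> H2 pc z \<in> set labels"
  "pc < length prog \<Longrightarrow> H3 pc z \<in> set labels" "pc < length prog \<Longrightarrow> H4 pc z \<in> set labels"
  "pc < length prog \<Longrightarrow> i < length (RO pc z) \<Longrightarrow> LG pc z i \<in> set labels"
  "C0 \<in> set labels" "C1f \<in> set labels" "C1 \<in> set labels" "C2 \<in> set labels" "C3 \<in> set labels"
  "C4 \<in> set labels" "C5 \<in> set labels" "C6 \<in> set labels" "E2 \<in> set labels" "E3 \<in> set labels"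
  "E4 \<in> set labels" "E5 \<in> set labels" "E6 \<in> set labels"
  unfolding labels_def by (cases z; force)+

end


definition at :: "sym list \<Rightarrow> nat \<Rightarrow> sym list \<Rightarrow> bool" where
  "at w i u \<longleftrightarrow> i + length u < length (tape w) \<and> (\<forall>k<length u. tape w ! (i+k) = u ! k)"

lemma at_append: "at w i (u @ v) \<longleftrightarrow> at w i u \<and> at w (i + length u) v"
proof
  assume h: "at w i (u @ v)"
  have a: "tape w ! (i + k) = (u @ v) ! k" if "k < length u + length v" for k
    using h that unfolding at_def by simp
  show "at w i u \<and> at w (i + length u) v"
    unfolding at_def
  proof (intro conjI allI impI)
    show "i + length u < length (tape w)" using h unfolding at_def by simp
    show "i + length u + length v < length (tape w)" using h unfolding at_def by simp
    fix k
    show "k < length u \<Longrightarrow> tape w ! (i + k) = u ! k" using a[of k] by (simp add: nth_append)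
    show "k < length v \<Longrightarrow> tape w ! (i + length u + k) = v ! k" using a[of "length u + k"]
      by (simp add: nth_append add.assoc)
  qed
next
  assume h: "at w i u \<and> at w (i + length u) v"
  show "at w i (u @ v)"
    unfolding at_def
  proof (intro conjI allI impI)
    show "i + length (u @ v) < length (tape w)" using h unfolding at_def by simp
    fix k assume k: "k < length (u @ v)"
    show "tape w ! (i + k) = (u @ v) ! k"
    proof (cases "k < length u")
      case True then show ?thesis using h unfolding at_def by (simp add: nth_append)
    next
      case False
      then obtain m where m: "k = length u + m" by (metis le_add_diff_inverse not_less)
      then have "m < length v" using k by simp
      then show ?thesis using h m unfolding at_def by (simp add: nth_append add.assoc)
    qed
  qed
qed

lemma at_Cons: "at w i (a # v) \<longleftrightarrow> at w i [a] \<and> at w (Suc i) v"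
  using at_append[of w i "[a]" v] by simp

lemma at_code: "at w (Suc 0) w"
  unfolding at_def tape_def by (auto simp: nth_append)

lemma at_LEnd: "at w 0 [LEnd]"
  unfolding at_def tape_def by auto

definition segrun :: "sym list \<Rightarrow> state \<Rightarrow> nat \<Rightarrow> sym list \<Rightarrow> state \<Rightarrow> sym list \<Rightarrow> sym list \<Rightarrow> bool" where
  "segrun w q i u q' o1 o2 \<longleftrightarrow> (step_nq w)\<^sup>*\<^sup>* (q, i, o1) (q', i + length u, o2)"

lemma seg_comp: "segrun w q i u q' o1 o2 \<Longrightarrow> segrun w q' (i + length u) v q'' o2 o3 \<Longrightarrow> segrun w q i (u @ v) q'' o1 o3"
  unfolding segrun_def by (simp add: add.assoc)

lemma at1: "at w i [a] \<Longrightarrow> tape w ! i = a \<and> Suc i < length (tape w)"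
  unfolding at_def by auto

lemma seg_rgt:
  assumes "at w i [a]" "has_tuple w (q, a, q', b, Rgt)" "snd q" "q' \<noteq> q1" "b \<noteq> Blank"
  shows "segrun w q i [a] q' out (out @ [b])"
proof -
  have mh: "move_head (length (tape w)) Rgt i = Suc i" using at1[OF assms(1)] by (auto simp: min_def)
  have "step w (q, i, out) (q', Suc i, out @ [b])"
    using at1[OF assms(1)] assms(2-5) mh unfolding step_def
    by (simp only: split) (rule exI[of _ a], rule exI[of _ b], rule exI[of _ Rgt], simp)
  then show ?thesis using assms(4) unfolding segrun_def step_nq_def by auto
qed

lemma seg_stay:
  assumes "at w i [a]" "has_tuple w (q, a, q', b, Stay)" "snd q" "q' \<noteq> q1" "b \<noteq> Blank"
  shows "segrun w q i [] q' out (out @ [b])"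
proof -
  have "step w (q, i, out) (q', i, out @ [b])"
    using at1[OF assms(1)] assms(2-5) unfolding step_def
    by (simp only: split) (rule exI[of _ a], rule exI[of _ b], rule exI[of _ Stay], simp)
  then show ?thesis using assms(4) unfolding segrun_def step_nq_def by auto
qed

lemma seg_scan:
  assumes "at w i u" "\<forall>a\<in>set u. has_tuple w (q, a, q, a, Rgt)" "snd q" "q \<noteq> q1" "Blank \<notin> set u"
  shows "segrun w q i u q out (out @ u)"
  using assms
proof (induction u arbitrary: i out)
  case Nil then show ?case by (simp add: segrun_def)
next
  case (Cons a u)
  have 1: "segrun w q i [a] q out (out @ [a])"
    by (rule seg_rgt) (use Cons.prems in \<open>auto simp: at_Cons[of w i a u]\<close>)
  have 2: "segrun w q (i + length [a]) u q (out @ [a]) ((out @ [a]) @ u)"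
    by (rule Cons.IH) (use Cons.prems in \<open>auto simp: at_Cons[of w i a u]\<close>)
  show ?case using seg_comp[OF 1 2] by simp
qed

lemma enc_Jt: "enc_tuple (Jt n) = [SR, EndN, Z, ST] @ replicate n One1 @ [EndN, Z, MvN]"
  by (simp add: Jt_def q1_def)
lemma enc_J2t: "enc_tuple (J2t n) = [SR, EndN, One1, ST] @ replicate n One1 @ [EndN, Z, MvN]"
  by (simp add: J2t_def q1_def)
lemma enc_Et: "enc_tuple Et = [SR, EndN, EndN, SR, EndN, Z, MvN]"
  by (simp add: Et_def q1_def)
lemma enc_regt: "enc_tuple (regt t s j) = [ST] @ replicate (Suc j + t) One1 @ [EndN, Z, ST] @ replicate (s j) One1 @ [EndN, Z, MvN]"
  by (simp add: regt_def)
lemma enc_qtup: "enc_tuple (qtup p) = [ST, EndN, Z, SR] @ replicate (Suc (to_nat (LI p))) One1 @ [EndN, Z, MvN]"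
  by (simp add: qtup_def q0_def st_def)

context am
begin

lemma RO_nb: "Blank \<notin> set (RO pc z)"
  by (simp add: RO_def enc_qtup)

lemma RO_len: "3 + QL pc < length (RO pc z)"
  by (simp add: RO_def enc_qtup)

lemma RO_nth_nb: "i < length (RO pc z) \<Longrightarrow> RO pc z ! i \<noteq> Blank"
  using RO_nb nth_mem by metis

lemma RO_nth0: "RO pc z ! 0 \<noteq> Blank"
  using RO_nth_nb[of 0 pc z] RO_len[of pc z] by fastforce

lemma dlt_nb: "dlt l a = Some (q', b, d) \<Longrightarrow> b \<noteq> Blank"
  unfolding dlt_def using RO_nth0 RO_nth_nb by (auto split: lbl.splits if_splits)

lemma segD_rgt:
  assumes "at (code g pc s) i [a]" "l \<in> set labels" "dlt l a = Some (q', b, Rgt)" "q' \<noteq> q1"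
  shows "segrun (code g pc s) (st l) i [a] q' out (out @ [b])"
  by (rule seg_rgt[OF assms(1) dlt_tuple[OF assms(2,3)]]) (use assms dlt_nb[OF assms(3)] in auto)

lemma segD_stay:
  assumes "at (code g pc s) i [a]" "l \<in> set labels" "dlt l a = Some (q', b, Stay)" "q' \<noteq> q1"
  shows "segrun (code g pc s) (st l) i [] q' out (out @ [b])"
  by (rule seg_stay[OF assms(1) dlt_tuple[OF assms(2,3)]]) (use assms dlt_nb[OF assms(3)] in auto)

lemma segD_scan:
  assumes "at (code g pc s) i u" "l \<in> set labels" "\<forall>a\<in>set u. dlt l a = Some (st l, a, Rgt)"
  shows "segrun (code g pc s) (st l) i u (st l) out (out @ u)"
proof (rule seg_scan)
  show "Blank \<notin> set u" using assms(3) by (auto simp: dlt_def)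
  show "\<forall>a\<in>set u. has_tuple (code g pc s) (st l, a, st l, a, Rgt)"
    using assms(3) dlt_tuple[OF assms(2)] by blast
qed (use assms in auto)

lemma code_split: "code (tj, t, u) pc s = enc_tuple (Jt tj) @ concat (map enc_tuple (map (regt t s) [0..<K])) @
   enc_tuple (J2t u) @ enc_tuple (qtup pc) @ concat (map enc_tuple P) @ enc_tuple Et"
  by (simp add: code_def TS_def)


lemma seg_comp': "segrun w q i u q' o1 o2 \<Longrightarrow> j = i + length u \<Longrightarrow> segrun w q' j v q'' o2 o3 \<Longrightarrow> segrun w q i (u @ v) q'' o1 o3"
  using seg_comp by blast

lemma walk:
  assumes "at (code g pc s) i u" "length v = length u"
    "\<forall>k<length u. L k \<in> set labels \<and> dlt (L k) (u!k) = Some (st (L (Suc k)), v!k, Rgt)"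
  shows "segrun (code g pc s) (st (L 0)) i u (st (L (length u))) out (out @ v)"
  using assms
proof (induction u arbitrary: i v L out)
  case Nil then show ?case by (simp add: segrun_def)
next
  case (Cons a u)
  obtain b v' where v: "v = b # v'" using Cons.prems(2) by (cases v) auto
  have 1: "segrun (code g pc s) (st (L 0)) i [a] (st (L (Suc 0))) out (out @ [b])"
    by (rule segD_rgt) (use Cons.prems v in \<open>auto simp: at_Cons[of _ i a u]\<close>)
  have P3: "\<forall>k<length u. L (Suc k) \<in> set labels \<and> dlt (L (Suc k)) (u!k) = Some (st (L (Suc (Suc k))), v'!k, Rgt)"
  proof (intro allI impI)
    fix k assume "k < length u"
    then show "L (Suc k) \<in> set labels \<and> dlt (L (Suc k)) (u!k) = Some (st (L (Suc (Suc k))), v'!k, Rgt)"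
      using Cons.prems(3)[rule_format, of "Suc k"] v by simp
  qed
  have 2: "segrun (code g pc s) (st (L (Suc 0))) (Suc i) u (st (L (Suc (length u)))) (out @ [b]) ((out @ [b]) @ v')"
    using Cons.IH[of "Suc i" v' "\<lambda>k. L (Suc k)" "out @ [b]", OF _ _ P3] Cons.prems v
    by (auto simp: at_Cons[of _ i a u])
  show ?case using seg_comp'[OF 1 _ 2] v by simp
qed

lemmas dlt_LI = dlt_def[of "LI pc" for pc, simplified lbl.case]
lemmas dlt_F1 = dlt_def[of "F1 pc" for pc, simplified lbl.case]
lemmas dlt_F2 = dlt_def[of "F2 pc" for pc, simplified lbl.case]
lemmas dlt_F3 = dlt_def[of "F3 pc" for pc, simplified lbl.case]
lemmas dlt_F4 = dlt_def[of "F4 pc" for pc, simplified lbl.case]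
lemmas dlt_F5 = dlt_def[of "F5 pc" for pc, simplified lbl.case]
lemmas dlt_F6 = dlt_def[of "F6 pc" for pc, simplified lbl.case]
lemmas dlt_F7 = dlt_def[of "F7 pc" for pc, simplified lbl.case]
lemmas dlt_RA = dlt_def[of "RA pc j z" for pc j z, simplified lbl.case]
lemmas dlt_RK = dlt_def[of "RK pc j z" for pc j z, simplified lbl.case]
lemmas dlt_RC = dlt_def[of "RC pc j z" for pc j z, simplified lbl.case]
lemmas dlt_IK = dlt_def[of "IK pc" for pc, simplified lbl.case]
lemmas dlt_IE = dlt_def[of "IE pc" for pc, simplified lbl.case]
lemmas dlt_IZ = dlt_def[of "IZ pc" for pc, simplified lbl.case]
lemmas dlt_IV = dlt_def[of "IV pc" for pc, simplified lbl.case]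
lemmas dlt_D1 = dlt_def[of "D1 pc" for pc, simplified lbl.case]
lemmas dlt_D2 = dlt_def[of "D2 pc" for pc, simplified lbl.case]
lemmas dlt_D3 = dlt_def[of "D3 pc" for pc, simplified lbl.case]
lemmas dlt_D4 = dlt_def[of "D4 pc" for pc, simplified lbl.case]
lemmas dlt_H1 = dlt_def[of "H1 pc z" for pc z, simplified lbl.case]
lemmas dlt_H2 = dlt_def[of "H2 pc z" for pc z, simplified lbl.case]
lemmas dlt_H3 = dlt_def[of "H3 pc z" for pc z, simplified lbl.case]
lemmas dlt_H4 = dlt_def[of "H4 pc z" for pc z, simplified lbl.case]
lemmas dlt_LG = dlt_def[of "LG pc z i" for pc z i, simplified lbl.case]
lemmas dlt_C0 = dlt_def[of "C0", simplified lbl.case]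
lemmas dlt_C1f = dlt_def[of "C1f", simplified lbl.case]
lemmas dlt_C1 = dlt_def[of "C1", simplified lbl.case]
lemmas dlt_C2 = dlt_def[of "C2", simplified lbl.case]
lemmas dlt_C3 = dlt_def[of "C3", simplified lbl.case]
lemmas dlt_C4 = dlt_def[of "C4", simplified lbl.case]
lemmas dlt_C5 = dlt_def[of "C5", simplified lbl.case]
lemmas dlt_C6 = dlt_def[of "C6", simplified lbl.case]
lemmas dlt_E2 = dlt_def[of "E2", simplified lbl.case]
lemmas dlt_E3 = dlt_def[of "E3", simplified lbl.case]
lemmas dlt_E4 = dlt_def[of "E4", simplified lbl.case]
lemmas dlt_E5 = dlt_def[of "E5", simplified lbl.case]
lemmas dlt_E6 = dlt_def[of "E6", simplified lbl.case]
lemmas dlt_simps = dlt_LI dlt_F1 dlt_F2 dlt_F3 dlt_F4 dlt_F5 dlt_F6 dlt_F7 dlt_RA dlt_RK dlt_RC dlt_IK dlt_IE dlt_IZ dlt_IV dlt_D1 dlt_D2 dlt_D3 dlt_D4 dlt_H1 dlt_H2 dlt_H3 dlt_H4 dlt_LG dlt_C0 dlt_C1f dlt_C1 dlt_C2 dlt_C3 dlt_C4 dlt_C5 dlt_C6 dlt_E2 dlt_E3 dlt_E4 dlt_E5 dlt_E6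

lemma walk':
  assumes "at (code g pc s) i u" "length v = length u"
    "\<forall>k<length u. L k \<in> set labels \<and> dlt (L k) (u!k) = Some (st (L (Suc k)), v!k, Rgt)"
    "q = st (L 0)" "q' = st (L (length u))" "out' = out @ v"
  shows "segrun (code g pc s) q i u q' out out'"
  using walk[OF assms(1-3)] assms(4-6) by simp

lemma front:
  assumes pc: "pc < length prog"
  shows "segrun (code (tj, t, u) pc s) (st (LI pc)) 0 ([LEnd] @ enc_tuple (Jt tj)) (st (RA pc 0 False)) [] (enc_tuple (Jt (Suc tj)))"
proof -
  let ?w = "code (tj, t, u) pc s"
  have A0: "at ?w (Suc 0) ?w" by (rule at_code)
  have A: "at ?w (Suc 0) (enc_tuple (Jt tj))" using A0 unfolding code_split[of tj t u pc s] at_append by blast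
  have A1: "at ?w 0 ([LEnd] @ enc_tuple (Jt tj))" unfolding at_append[of _ 0 "[LEnd]"] using at_LEnd A by simp
  have A': "at ?w 0 ([LEnd, SR, EndN, Z, ST] @ replicate tj One1 @ [EndN, Z, MvN])"
    using A1 by (simp add: enc_Jt)
  have a1: "at ?w 0 [LEnd, SR, EndN, Z, ST]" "at ?w 5 (replicate tj One1)" "at ?w (5 + tj) [EndN, Z, MvN]"
    using A' at_append[of ?w 0 "[LEnd, SR, EndN, Z, ST]" "replicate tj One1 @ [EndN, Z, MvN]"]
      at_append[of ?w 5 "replicate tj One1" "[EndN, Z, MvN]"] by (simp_all add: eval_nat_numeral)
  have 1: "segrun ?w (st (LI pc)) 0 [LEnd, SR, EndN, Z, ST] (st (F5 pc)) [] [SR, EndN, Z, ST, One1]"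
    by (rule walk'[OF a1(1), where L="\<lambda>k. [LI pc, F1 pc, F2 pc, F3 pc, F4 pc, F5 pc] ! k"])
      (use pc in \<open>auto simp: less_Suc_eq dlt_simps\<close>)
  have 2: "segrun ?w (st (F5 pc)) 5 (replicate tj One1) (st (F5 pc)) [SR, EndN, Z, ST, One1] ([SR, EndN, Z, ST, One1] @ replicate tj One1)"
    by (rule segD_scan[OF a1(2)]) (use pc in \<open>auto simp: dlt_simps\<close>)
  have 3: "segrun ?w (st (F5 pc)) (5 + tj) [EndN, Z, MvN]
     (st (RA pc 0 False)) ([SR, EndN, Z, ST, One1] @ replicate tj One1)
     (([SR, EndN, Z, ST, One1] @ replicate tj One1) @ [EndN, Z, MvN])"
    by (rule walk'[OF a1(3), where L="\<lambda>k. [F5 pc, F6 pc, F7 pc, RA pc 0 False] ! k"])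
      (use pc in \<open>auto simp: less_Suc_eq dlt_simps\<close>)
  have "segrun ?w (st (LI pc)) 0 ([LEnd, SR, EndN, Z, ST] @ replicate tj One1 @ [EndN, Z, MvN]) (st (RA pc 0 False)) []
     (([SR, EndN, Z, ST, One1] @ replicate tj One1) @ [EndN, Z, MvN])"
    using seg_comp'[OF 1 _ seg_comp'[OF 2 _ 3]] by simp
  then show ?thesis by (simp add: enc_Jt)
qed

lemma at_sub: "at w i x \<Longrightarrow> x = u @ v @ r \<Longrightarrow> j = i + length u \<Longrightarrow> at w j v"
  using at_append[of w i u "v @ r"] at_append[of w "i + length u" v r] by auto

lemma seg_stay':
  assumes "at (code g pc s) i [a]" "l \<in> set labels" "dlt l a = Some (st l', b, Stay)" "out' = out @ [b]"
  shows "segrun (code g pc s) (st l) i [] (st l') out out'"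
  using segD_stay[OF assms(1-3)] assms(4) by simp

lemma seg_scan':
  assumes "at (code g pc s) i u" "l \<in> set labels" "\<forall>a\<in>set u. dlt l a = Some (st l, a, Rgt)" "out' = out @ u"
  shows "segrun (code g pc s) (st l) i u (st l) out out'"
  using segD_scan[OF assms(1-3)] assms(4) by simp

definition newregs :: "nat \<Rightarrow> regs \<Rightarrow> regs" where
  "newregs pc s = (case prog ! pc of Inc r \<Rightarrow> s(r := Suc (s r)) | Dec r j \<Rightarrow> if s r = 0 then s else s(r := s r - 1))"

definition zb :: "nat \<Rightarrow> regs \<Rightarrow> nat \<Rightarrow> bool" where
  "zb pc s j = (isDec (prog ! pc) \<and> areg (prog ! pc) < j \<and> s (areg (prog ! pc)) = 0)"

lemma reg_other:
  assumes pc: "pc < length prog" and j: "j < K" "j \<noteq> areg (prog ! pc)"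
    and A: "at (code g pc s0) i (enc_tuple (regt t s j))"
  shows "segrun (code g pc s0) (st (RA pc j z)) i (enc_tuple (regt t s j)) (st (RA pc (Suc j) z)) out
           (out @ enc_tuple (regt (Suc t) s j))"
proof -
  let ?w = "code g pc s0"
  let ?X = "replicate (Suc j + t) One1 @ [EndN, Z, ST] @ replicate (s j) One1 @ [EndN, Z]"
  have A': "at ?w i ([ST] @ ?X @ [MvN])" using A by (simp add: enc_regt)
  have 1: "segrun ?w (st (RA pc j z)) i [ST] (st (RK pc j z)) out (out @ [ST])"
    by (rule walk'[where L="\<lambda>k. [RA pc j z, RK pc j z] ! k"]) (use A' pc j in \<open>auto intro: at_sub[OF A', of "[]" _ "?X @ [MvN]"] simp: dlt_simps\<close>)
  have 2: "segrun ?w (st (RK pc j z)) (Suc i) [] (st (RC pc j z)) (out @ [ST]) (out @ [ST, One1])"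
    by (rule seg_stay'[where a = One1]) (use A' pc j in \<open>auto intro: at_sub[OF A', of "[ST]" _ "replicate (j + t) One1 @ [EndN, Z, ST] @ replicate (s j) One1 @ [EndN, Z, MvN]"] simp: dlt_simps\<close>)
  have 3: "segrun ?w (st (RC pc j z)) (Suc i) ?X (st (RC pc j z)) (out @ [ST, One1]) (out @ [ST, One1] @ ?X)"
    by (rule seg_scan') (use A' pc j in \<open>auto intro: at_sub[OF A', of "[ST]" _ "[MvN]"] simp: dlt_simps\<close>)
  have 4: "segrun ?w (st (RC pc j z)) (Suc i + length ?X) [MvN] (st (RA pc (Suc j) z)) (out @ [ST, One1] @ ?X) (out @ [ST, One1] @ ?X @ [MvN])"
    by (rule walk'[where L="\<lambda>k. [RC pc j z, RA pc (Suc j) z] ! k"]) (use A' pc j in \<open>auto intro: at_sub[OF A', of "[ST] @ ?X" _ "[]"] simp: dlt_simps\<close>)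
  have "segrun ?w (st (RA pc j z)) i ([ST] @ [] @ ?X @ [MvN]) (st (RA pc (Suc j) z)) out (out @ [ST, One1] @ ?X @ [MvN])"
    by (rule seg_comp'[OF 1 _ seg_comp'[OF 2 _ seg_comp'[OF 3 _ 4]]]) simp_all
  then show ?thesis by (simp add: enc_regt)
qed

end


lemma rep_shift: "replicate n x @ x # r = x # replicate n x @ r"
  by (metis append_Cons append_assoc replicate_app_Cons_same)

context am begin

lemma reg_inc:
  assumes pc: "pc < length prog" and j: "j < K" and ins: "prog ! pc = Inc j"
    and A: "at (code g pc s0) i (enc_tuple (regt t s j))"
  shows "segrun (code g pc s0) (st (RA pc j False)) i (enc_tuple (regt t s j)) (st (RA pc (Suc j) False)) out
           (out @ enc_tuple (regt (Suc t) (s(j := Suc (s j))) j))"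
proof -
  let ?w = "code g pc s0"
  let ?K = "replicate (Suc j + t) One1"
  let ?V = "replicate (s j) One1 @ [EndN, Z]"
  have A': "at ?w i ([ST] @ ?K @ [EndN, Z, ST] @ ?V @ [MvN])" using A by (simp add: enc_regt)
  have 1: "segrun ?w (st (RA pc j False)) i [ST] (st (RK pc j False)) out (out @ [ST])"
    by (rule walk'[where L="\<lambda>k. [RA pc j False, RK pc j False] ! k"]) (use A' pc j ins in \<open>auto intro: at_sub[OF A', of "[]" _ "?K @ [EndN, Z, ST] @ ?V @ [MvN]"] simp: dlt_simps\<close>)
  have 2: "segrun ?w (st (RK pc j False)) (Suc i) [] (st (IK pc)) (out @ [ST]) (out @ [ST, One1])"
    by (rule seg_stay'[where a = One1]) (use A' pc j ins in \<open>auto intro: at_sub[OF A', of "[ST]" _ "replicate (j + t) One1 @ [EndN, Z, ST] @ ?V @ [MvN]"] simp: dlt_simps\<close>)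
  have 3: "segrun ?w (st (IK pc)) (Suc i) ?K (st (IK pc)) (out @ [ST, One1]) (out @ [ST, One1] @ ?K)"
    by (rule seg_scan') (use A' pc j in \<open>auto intro: at_sub[OF A', of "[ST]" _ "[EndN, Z, ST] @ ?V @ [MvN]"] simp: dlt_simps\<close>)
  have 4: "segrun ?w (st (IK pc)) (Suc i + length ?K) [EndN, Z, ST] (st (IV pc)) (out @ [ST, One1] @ ?K) (out @ [ST, One1] @ ?K @ [EndN, Z, ST])"
    by (rule walk'[where L="\<lambda>k. [IK pc, IE pc, IZ pc, IV pc] ! k"]) (use A' pc j in \<open>auto intro: at_sub[OF A', of "[ST] @ ?K" _ "?V @ [MvN]"] simp: dlt_simps less_Suc_eq\<close>)
  have 5: "segrun ?w (st (IV pc)) (Suc i + length ?K + 3) [] (st (RC pc j False)) (out @ [ST, One1] @ ?K @ [EndN, Z, ST])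
     (out @ [ST, One1] @ ?K @ [EndN, Z, ST, One1])"
  proof (cases "s j")
    case 0
    show ?thesis
      by (rule seg_stay'[where a = EndN]) (use A' pc j ins 0 in \<open>auto intro: at_sub[OF A', of "[ST] @ ?K @ [EndN, Z, ST]" _ "[Z, MvN]"] simp: dlt_simps\<close>)
  next
    case (Suc m)
    show ?thesis
      by (rule seg_stay'[where a = One1]) (use A' pc j ins Suc in \<open>auto intro: at_sub[OF A', of "[ST] @ ?K @ [EndN, Z, ST]" _ "replicate m One1 @ [EndN, Z, MvN]"] simp: dlt_simps\<close>)
  qed
  have 6: "segrun ?w (st (RC pc j False)) (Suc i + length ?K + 3) ?V (st (RC pc j False)) (out @ [ST, One1] @ ?K @ [EndN, Z, ST, One1])
     (out @ [ST, One1] @ ?K @ [EndN, Z, ST, One1] @ ?V)"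
    by (rule seg_scan') (use A' pc j in \<open>auto intro: at_sub[OF A', of "[ST] @ ?K @ [EndN, Z, ST]" _ "[MvN]"] simp: dlt_simps\<close>)
  have 7: "segrun ?w (st (RC pc j False)) (Suc i + length ?K + 3 + length ?V) [MvN] (st (RA pc (Suc j) False))
     (out @ [ST, One1] @ ?K @ [EndN, Z, ST, One1] @ ?V) (out @ [ST, One1] @ ?K @ [EndN, Z, ST, One1] @ ?V @ [MvN])"
    by (rule walk'[where L="\<lambda>k. [RC pc j False, RA pc (Suc j) False] ! k"]) (use A' pc j in \<open>auto intro: at_sub[OF A', of "[ST] @ ?K @ [EndN, Z, ST] @ ?V" _ "[]"] simp: dlt_simps\<close>)
  have "segrun ?w (st (RA pc j False)) i ([ST] @ [] @ ?K @ [EndN, Z, ST] @ [] @ ?V @ [MvN]) (st (RA pc (Suc j) False)) out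
     (out @ [ST, One1] @ ?K @ [EndN, Z, ST, One1] @ ?V @ [MvN])"
    by (rule seg_comp'[OF 1 _ seg_comp'[OF 2 _ seg_comp'[OF 3 _ seg_comp'[OF 4 _ seg_comp'[OF 5 _ seg_comp'[OF 6 _ 7]]]]]]) simp_all
  then show ?thesis by (simp add: enc_regt replicate_append_same)
qed


lemma reg_dec:
  assumes pc: "pc < length prog" and j: "j < K" and ins: "prog ! pc = Dec j jj"
    and A: "at (code g pc s0) i (enc_tuple (regt t s j))"
  shows "segrun (code g pc s0) (st (RA pc j False)) i (enc_tuple (regt t s j)) (st (RA pc (Suc j) (s j = 0))) out
           (out @ enc_tuple (regt (Suc t) (if s j = 0 then s else s(j := s j - 1)) j))"
proof -
  let ?w = "code g pc s0"
  let ?K = "replicate (j + t) One1"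
  have A': "at ?w i ([ST, One1] @ ?K @ [EndN, Z, ST] @ replicate (s j) One1 @ [EndN, Z, MvN])" using A by (simp add: enc_regt)
  have 1: "segrun ?w (st (RA pc j False)) i [ST, One1] (st (D1 pc)) out (out @ [ST, One1])"
    by (rule walk'[where L="\<lambda>k. [RA pc j False, RK pc j False, D1 pc] ! k"]) (use A' pc j ins in \<open>auto intro: at_sub[OF A', of "[]" _ "?K @ [EndN, Z, ST] @ replicate (s j) One1 @ [EndN, Z, MvN]"] simp: dlt_simps less_Suc_eq\<close>)
  have 3: "segrun ?w (st (D1 pc)) (Suc (Suc i)) ?K (st (D1 pc)) (out @ [ST, One1]) (out @ [ST, One1] @ ?K)"
    by (rule seg_scan') (use A' pc j in \<open>auto intro: at_sub[OF A', of "[ST, One1]" _ "[EndN, Z, ST] @ replicate (s j) One1 @ [EndN, Z, MvN]"] simp: dlt_simps\<close>)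
  show ?thesis
  proof (cases "s j")
    case 0
    have A0: "at ?w i ([ST, One1] @ ?K @ [EndN, Z, ST] @ [EndN, Z, MvN])" using A' 0 by simp
    have 4: "segrun ?w (st (D1 pc)) (Suc (Suc i) + length ?K) [EndN, Z, ST] (st (D4 pc)) (out @ [ST, One1] @ ?K) (out @ [ST, One1] @ ?K @ [One1, EndN, Z])"
      by (rule walk'[where L="\<lambda>k. [D1 pc, D2 pc, D3 pc, D4 pc] ! k"]) (use A0 pc j in \<open>auto intro: at_sub[OF A0, of "[ST, One1] @ ?K" _ "[EndN, Z, MvN]"] simp: dlt_simps less_Suc_eq\<close>)
    have 5: "segrun ?w (st (D4 pc)) (Suc (Suc i) + length ?K + 3) [] (st (RC pc j True)) (out @ [ST, One1] @ ?K @ [One1, EndN, Z])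
        (out @ [ST, One1] @ ?K @ [One1, EndN, Z, ST])"
      by (rule seg_stay'[where a = EndN]) (use A0 pc j ins in \<open>auto intro: at_sub[OF A0, of "[ST, One1] @ ?K @ [EndN, Z, ST]" _ "[Z, MvN]"] simp: dlt_simps\<close>)
    have 6: "segrun ?w (st (RC pc j True)) (Suc (Suc i) + length ?K + 3) [EndN, Z, MvN] (st (RA pc (Suc j) True))
        (out @ [ST, One1] @ ?K @ [One1, EndN, Z, ST]) (out @ [ST, One1] @ ?K @ [One1, EndN, Z, ST] @ [EndN, Z, MvN])"
      by (rule walk'[where L="\<lambda>k. [RC pc j True, RC pc j True, RC pc j True, RA pc (Suc j) True] ! k"]) (use A0 pc j in \<open>auto intro: at_sub[OF A0, of "[ST, One1] @ ?K @ [EndN, Z, ST]" _ "[]"] simp: dlt_simps less_Suc_eq\<close>)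
    have "segrun ?w (st (RA pc j False)) i ([ST, One1] @ ?K @ [EndN, Z, ST] @ [] @ [EndN, Z, MvN]) (st (RA pc (Suc j) True)) out
        (out @ [ST, One1] @ ?K @ [One1, EndN, Z, ST] @ [EndN, Z, MvN])"
      by (rule seg_comp'[OF 1 _ seg_comp'[OF 3 _ seg_comp'[OF 4 _ seg_comp'[OF 5 _ 6]]]]) simp_all
    then show ?thesis using 0 by (simp add: enc_regt rep_shift)
  next
    case (Suc m)
    have A0: "at ?w i ([ST, One1] @ ?K @ [EndN, Z, ST, One1] @ replicate m One1 @ [EndN, Z] @ [MvN])" using A' Suc by simp
    have 4: "segrun ?w (st (D1 pc)) (Suc (Suc i) + length ?K) [EndN, Z, ST, One1] (st (RC pc j False)) (out @ [ST, One1] @ ?K) (out @ [ST, One1] @ ?K @ [One1, EndN, Z, ST])"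
      by (rule walk'[where L="\<lambda>k. [D1 pc, D2 pc, D3 pc, D4 pc, RC pc j False] ! k"]) (use A0 pc j ins in \<open>auto intro: at_sub[OF A0, of "[ST, One1] @ ?K" _ "replicate m One1 @ [EndN, Z] @ [MvN]"] simp: dlt_simps less_Suc_eq\<close>)
    have 5: "segrun ?w (st (RC pc j False)) (Suc (Suc i) + length ?K + 4) (replicate m One1 @ [EndN, Z]) (st (RC pc j False))
        (out @ [ST, One1] @ ?K @ [One1, EndN, Z, ST]) (out @ [ST, One1] @ ?K @ [One1, EndN, Z, ST] @ replicate m One1 @ [EndN, Z])"
      by (rule seg_scan') (use A0 pc j in \<open>auto intro: at_sub[OF A0, of "[ST, One1] @ ?K @ [EndN, Z, ST, One1]" _ "[MvN]"] simp: dlt_simps\<close>)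
    have 6: "segrun ?w (st (RC pc j False)) (Suc (Suc i) + length ?K + 4 + (m + 2)) [MvN] (st (RA pc (Suc j) False))
        (out @ [ST, One1] @ ?K @ [One1, EndN, Z, ST] @ replicate m One1 @ [EndN, Z])
        (out @ [ST, One1] @ ?K @ [One1, EndN, Z, ST] @ replicate m One1 @ [EndN, Z] @ [MvN])"
      by (rule walk'[where L="\<lambda>k. [RC pc j False, RA pc (Suc j) False] ! k"]) (use A0 pc j in \<open>auto intro: at_sub[OF A0, of "[ST, One1] @ ?K @ [EndN, Z, ST, One1] @ replicate m One1 @ [EndN, Z]" _ "[]"] simp: dlt_simps\<close>)
    have "segrun ?w (st (RA pc j False)) i ([ST, One1] @ ?K @ [EndN, Z, ST, One1] @ (replicate m One1 @ [EndN, Z]) @ [MvN]) (st (RA pc (Suc j) False)) out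
        (out @ [ST, One1] @ ?K @ [One1, EndN, Z, ST] @ replicate m One1 @ [EndN, Z] @ [MvN])"
      by (rule seg_comp'[OF 1 _ seg_comp'[OF 3 _ seg_comp'[OF 4 _ seg_comp'[OF 5 _ 6]]]]) simp_all
    then show ?thesis using Suc by (simp add: enc_regt rep_shift)
  qed
qed

lemma regt_cong: "s j = s' j \<Longrightarrow> regt t s j = regt t s' j"
  by (simp add: regt_def)

lemma reg_step:
  assumes pc: "pc < length prog" and j: "j < K" and ar: "areg (prog ! pc) < K"
    and A: "at (code g pc s0) i (enc_tuple (regt t s j))"
  shows "segrun (code g pc s0) (st (RA pc j (zb pc s j))) i (enc_tuple (regt t s j)) (st (RA pc (Suc j) (zb pc s (Suc j)))) out
           (out @ enc_tuple (regt (Suc t) (newregs pc s) j))"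
proof (cases "j = areg (prog ! pc)")
  case False
  have z: "zb pc s (Suc j) = zb pc s j" using False by (auto simp: zb_def)
  have n: "newregs pc s j = s j" using False by (auto simp: newregs_def split: instr.splits)
  show ?thesis using reg_other[OF pc j False A, of "zb pc s j" out] z regt_cong[of "newregs pc s" j s "Suc t", OF n] by simp
next
  case True
  show ?thesis
  proof (cases "prog ! pc")
    case (Inc r)
    with True have r: "r = j" by simp
    have z: "zb pc s j = False" "zb pc s (Suc j) = False" using Inc by (auto simp: zb_def)
    have n: "newregs pc s = s(j := Suc (s j))" using Inc r by (simp add: newregs_def)
    show ?thesis using reg_inc[OF pc j _ A, of out] Inc r z n by simp
  next
    case (Dec r jj)
    with True have r: "r = j" by simp
    have z: "zb pc s j = False" "zb pc s (Suc j) = (s j = 0)" using Dec r by (auto simp: zb_def)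
    have n: "newregs pc s = (if s j = 0 then s else s(j := s j - 1))" using Dec r by (simp add: newregs_def)
    show ?thesis using reg_dec[OF pc j _ A, of jj out] Dec r z n by simp
  qed
qed

definition Rs :: "nat \<Rightarrow> regs \<Rightarrow> nat \<Rightarrow> sym list" where
  "Rs t s n = concat (map enc_tuple (map (regt t s) [0..<n]))"

lemma Rs_Suc: "Rs t s (Suc n) = Rs t s n @ enc_tuple (regt t s n)"
  by (simp add: Rs_def)

lemma Rs_split: "n < K \<Longrightarrow> Rs t s K = Rs t s n @ enc_tuple (regt t s n) @ concat (map enc_tuple (map (regt t s) [Suc n..<K]))"
proof -
  assume n: "n < K"
  have "[0..<K] = [0..<n] @ [n..<K]" using upt_add_eq_append[of 0 n "K - n"] n by simp
  also have "[n..<K] = n # [Suc n..<K]" using n by (simp add: upt_conv_Cons)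
  finally have "[0..<K] = [0..<n] @ [n] @ [Suc n..<K]" by simp
  then show ?thesis by (simp add: Rs_def)
qed

lemma pass:
  assumes pc: "pc < length prog" and ar: "areg (prog ! pc) < K"
    and A: "at (code g pc s0) i (Rs t s K)"
  shows "n \<le> K \<Longrightarrow> segrun (code g pc s0) (st (RA pc 0 False)) i (Rs t s n) (st (RA pc n (zb pc s n))) out
           (out @ Rs (Suc t) (newregs pc s) n)"
proof (induction n)
  case 0 then show ?case by (simp add: Rs_def segrun_def zb_def)
next
  case (Suc n)
  then have n: "n < K" by simp
  have An: "at (code g pc s0) (i + length (Rs t s n)) (enc_tuple (regt t s n))"
    by (rule at_sub[OF A Rs_split[OF n]]) simp
  show ?case
    using seg_comp'[OF Suc.IH[OF less_imp_le[OF n]] _ reg_step[OF pc n ar An, of "out @ Rs (Suc t) (newregs pc s) n"]]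
    by (simp add: Rs_Suc)
qed
end

context am begin

lemma stay_chain:
  assumes pc: "pc < length prog" and A: "at (code g pc s0) p [a]" and nb: "a \<noteq> Blank"
  shows "3 + QL pc \<le> i \<Longrightarrow> i < length (RO pc z) \<Longrightarrow>
     segrun (code g pc s0) (st (LG pc z i)) p [] (st C0) out (out @ drop i (RO pc z))"
proof (induction "length (RO pc z) - i" arbitrary: i out)
  case 0 then show ?case by simp
next
  case (Suc m)
  have i0: "0 < i" "i < 3 + QL pc \<longleftrightarrow> False" using Suc.prems by auto
  show ?case
  proof (cases "Suc i < length (RO pc z)")
    case True
    have 1: "segrun (code g pc s0) (st (LG pc z i)) p [] (st (LG pc z (Suc i))) out (out @ [RO pc z ! i])"
      by (rule seg_stay'[OF A]) (use pc nb Suc.prems i0 True in \<open>auto simp: dlt_simps\<close>)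
    have m: "m = length (RO pc z) - Suc i" using Suc.hyps(2) by arith
    have 2: "segrun (code g pc s0) (st (LG pc z (Suc i))) p [] (st C0) (out @ [RO pc z ! i]) ((out @ [RO pc z ! i]) @ drop (Suc i) (RO pc z))"
      by (rule Suc.hyps(1)[OF m]) (use Suc.prems True in simp_all)
    have "drop i (RO pc z) = RO pc z ! i # drop (Suc i) (RO pc z)" using Suc.prems by (simp add: Cons_nth_drop_Suc)
    then show ?thesis using seg_comp'[OF 1 _ 2] by simp
  next
    case False
    then have last: "drop i (RO pc z) = [RO pc z ! i]" using Suc.prems
      by (metis Cons_nth_drop_Suc Suc_leI drop_all le_antisym not_less)
    have "segrun (code g pc s0) (st (LG pc z i)) p [] (st C0) out (out @ [RO pc z ! i])"
      by (rule seg_stay'[OF A]) (use pc nb Suc.prems i0 False in \<open>auto simp: dlt_simps\<close>)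
    then show ?thesis using last by simp
  qed
qed


lemma RO_split: "RO pc z = [RO pc z ! 0] @ take (2 + QL pc) (drop 1 (RO pc z)) @ drop (3 + QL pc) (RO pc z)"
proof -
  have l: "3 + QL pc < length (RO pc z)" by (rule RO_len)
  have e1: "RO pc z = take 1 (RO pc z) @ drop 1 (RO pc z)" by (rule append_take_drop_id[symmetric])
  have e2: "drop 1 (RO pc z) = take (2 + QL pc) (drop 1 (RO pc z)) @ drop (2 + QL pc) (drop 1 (RO pc z))"
    by (rule append_take_drop_id[symmetric])
  have e3: "drop (2 + QL pc) (drop 1 (RO pc z)) = drop (3 + QL pc) (RO pc z)" by (simp add: numeral_3_eq_3)
  have "RO pc z = take 1 (RO pc z) @ take (2 + QL pc) (drop 1 (RO pc z)) @ drop (3 + QL pc) (RO pc z)"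
    using e1 e2 e3 by metis
  moreover have "take 1 (RO pc z) = [RO pc z ! 0]" using l by (cases "RO pc z") auto
  ultimately show ?thesis by simp
qed

lemma j2region:
  assumes pc: "pc < length prog"
    and A: "at (code g pc s0) i (enc_tuple (J2t u) @ enc_tuple (qtup pc) @ [SR])"
  shows "segrun (code g pc s0) (st (RA pc K z)) i (enc_tuple (J2t u) @ enc_tuple (qtup pc)) (st C0) out
     (out @ enc_tuple (J2t (u + QL pc)) @ enc_tuple (qtup (npc pc z)))"
proof -
  let ?w = "code g pc s0"
  let ?Q = "enc_tuple (qtup pc)"
  have ql: "length ?Q = QL pc" by (simp add: QL_def)
  have A': "at ?w i ([SR, EndN, One1, ST] @ replicate u One1 @ [EndN] @ ([Z, MvN] @ ?Q) @ [SR])"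
    using A by (simp add: enc_J2t)
  have 1: "segrun ?w (st (RA pc K z)) i [SR, EndN, One1, ST] (st (H4 pc z)) out (out @ [SR, EndN, One1, ST])"
    by (rule walk'[where L="\<lambda>k. [RA pc K z, H1 pc z, H2 pc z, H3 pc z, H4 pc z] ! k"])
      (use A' pc in \<open>auto intro: at_sub[OF A', of "[]"] simp: dlt_simps less_Suc_eq\<close>)
  have 2: "segrun ?w (st (H4 pc z)) (i + 4) (replicate u One1) (st (H4 pc z)) (out @ [SR, EndN, One1, ST]) (out @ [SR, EndN, One1, ST] @ replicate u One1)"
    by (rule seg_scan') (use A' pc in \<open>auto intro: at_sub[OF A', of "[SR, EndN, One1, ST]"] simp: dlt_simps\<close>)
  have 3: "segrun ?w (st (H4 pc z)) (i + 4 + u) [EndN] (st (LG pc z 1)) (out @ [SR, EndN, One1, ST] @ replicate u One1)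
      (out @ [SR, EndN, One1, ST] @ replicate u One1 @ [RO pc z ! 0])"
    by (rule walk'[where L="\<lambda>k. [H4 pc z, LG pc z 1] ! k"])
      (use A' pc in \<open>auto intro: at_sub[OF A', of "[SR, EndN, One1, ST] @ replicate u One1"] simp: dlt_simps\<close>)
  have 4: "segrun ?w (st (LG pc z 1)) (i + 4 + u + 1) ([Z, MvN] @ ?Q) (st (LG pc z (3 + QL pc)))
      (out @ [SR, EndN, One1, ST] @ replicate u One1 @ [RO pc z ! 0])
      (out @ [SR, EndN, One1, ST] @ replicate u One1 @ [RO pc z ! 0] @ take (2 + QL pc) (drop 1 (RO pc z)))"
  proof (rule walk'[where L="\<lambda>k. LG pc z (Suc k)"])
    show "at ?w (i + 4 + u + 1) ([Z, MvN] @ ?Q)"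
      by (rule at_sub[OF A', of "[SR, EndN, One1, ST] @ replicate u One1 @ [EndN]" _ "[SR]"]) simp_all
    show "\<forall>k<length ([Z, MvN] @ ?Q). LG pc z (Suc k) \<in> set labels \<and>
        dlt (LG pc z (Suc k)) (([Z, MvN] @ ?Q) ! k) = Some (st (LG pc z (Suc (Suc k))), take (2 + QL pc) (drop 1 (RO pc z)) ! k, Rgt)"
    proof (intro allI impI)
      fix k assume k: "k < length ([Z, MvN] @ ?Q)"
      have l: "3 + QL pc < length (RO pc z)" by (rule RO_len)
      have nb: "([Z, MvN] @ ?Q) ! k \<noteq> Blank"
        using k nth_mem[OF k] by (auto simp: enc_qtup)
      show "LG pc z (Suc k) \<in> set labels \<and>
        dlt (LG pc z (Suc k)) (([Z, MvN] @ ?Q) ! k) = Some (st (LG pc z (Suc (Suc k))), take (2 + QL pc) (drop 1 (RO pc z)) ! k, Rgt)"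
        using k l pc nb ql by (auto simp: dlt_simps)
    qed
  qed (use ql RO_len[of pc z] in simp_all)
  have 5: "segrun ?w (st (LG pc z (3 + QL pc))) (i + 4 + u + 1 + (2 + QL pc)) [] (st C0)
      (out @ [SR, EndN, One1, ST] @ replicate u One1 @ [RO pc z ! 0] @ take (2 + QL pc) (drop 1 (RO pc z)))
      ((out @ [SR, EndN, One1, ST] @ replicate u One1 @ [RO pc z ! 0] @ take (2 + QL pc) (drop 1 (RO pc z))) @ drop (3 + QL pc) (RO pc z))"
  proof (rule stay_chain[OF pc _ _ order_refl RO_len])
    show "at ?w (i + 4 + u + 1 + (2 + QL pc)) [SR]"
      by (rule at_sub[OF A', of "[SR, EndN, One1, ST] @ replicate u One1 @ [EndN] @ ([Z, MvN] @ ?Q)" _ "[]"]) (simp_all add: ql)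
  qed simp
  have C: "segrun ?w (st (RA pc K z)) i ([SR, EndN, One1, ST] @ replicate u One1 @ [EndN] @ ([Z, MvN] @ ?Q) @ []) (st C0) out
      ((out @ [SR, EndN, One1, ST] @ replicate u One1 @ [RO pc z ! 0] @ take (2 + QL pc) (drop 1 (RO pc z))) @ drop (3 + QL pc) (RO pc z))"
    by (rule seg_comp'[OF 1 _ seg_comp'[OF 2 _ seg_comp'[OF 3 _ seg_comp'[OF 4 _ 5]]]]) (simp_all add: ql)
  have R: "[RO pc z ! 0] @ take (2 + QL pc) (drop 1 (RO pc z)) @ drop (3 + QL pc) (RO pc z) = RO pc z"
    using RO_split by metis
  have X: "segrun ?w (st (RA pc K z)) i ([SR, EndN, One1, ST] @ replicate u One1 @ [EndN] @ ([Z, MvN] @ ?Q) @ []) (st C0) out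
      (out @ [SR, EndN, One1, ST] @ replicate u One1 @ RO pc z)"
    using C unfolding append_assoc R .
  show ?thesis using X
    by (simp add: enc_J2t RO_def replicate_add QL_def)
qed

lemma enc_move_nb: "enc_move d \<noteq> Blank" by (cases d) auto

lemma copy_tuple:
  assumes t: "t \<in> set P" and A: "at (code g pc s0) i (enc_tuple t)"
  shows "segrun (code g pc s0) (st C0) i (enc_tuple t) (st C0) out (out @ enc_tuple t)"
proof -
  let ?w = "code g pc s0"
  obtain l a q' b d where td: "t = (st l, a, q', b, d)" "dlt l a = Some (q', b, d)" using P_mem[OF t] by blast
  obtain n' f' where q': "q' = (n', f')" by (cases q')
  have anb: "a \<noteq> Blank" using td(2) by (auto simp: dlt_def)
  have bnb: "b \<noteq> Blank" using dlt_nb[OF td(2)] .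
  let ?fl = "if f' then SR else ST"
  let ?L = "replicate (to_nat l) One1"
  let ?N = "replicate n' One1"
  have e: "enc_tuple t = [SR, One1] @ ?L @ [EndN, a, ?fl] @ ?N @ [EndN, b, enc_move d]"
    by (simp add: td q' st_def)
  have A': "at ?w i ([SR, One1] @ ?L @ [EndN, a, ?fl] @ ?N @ [EndN, b, enc_move d])" using A e by simp
  have 1: "segrun ?w (st C0) i [SR, One1] (st C1) out (out @ [SR, One1])"
    by (rule walk'[where L="\<lambda>k. [C0, C1f, C1] ! k"]) (use A' in \<open>auto intro: at_sub[OF A', of "[]"] simp: dlt_simps less_Suc_eq\<close>)
  have 2: "segrun ?w (st C1) (i + 2) ?L (st C1) (out @ [SR, One1]) (out @ [SR, One1] @ ?L)"
    by (rule seg_scan') (use A' in \<open>auto intro: at_sub[OF A', of "[SR, One1]"] simp: dlt_simps\<close>)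
  have 3: "segrun ?w (st C1) (i + 2 + to_nat l) [EndN, a, ?fl] (st C4) (out @ [SR, One1] @ ?L) (out @ [SR, One1] @ ?L @ [EndN, a, ?fl])"
    by (rule walk'[where L="\<lambda>k. [C1, C2, C3, C4] ! k"]) (use A' anb in \<open>auto intro: at_sub[OF A', of "[SR, One1] @ ?L"] simp: dlt_simps less_Suc_eq\<close>)
  have 4: "segrun ?w (st C4) (i + 2 + to_nat l + 3) ?N (st C4) (out @ [SR, One1] @ ?L @ [EndN, a, ?fl]) (out @ [SR, One1] @ ?L @ [EndN, a, ?fl] @ ?N)"
    by (rule seg_scan') (use A' in \<open>auto intro: at_sub[OF A', of "[SR, One1] @ ?L @ [EndN, a, ?fl]"] simp: dlt_simps\<close>)
  have 5: "segrun ?w (st C4) (i + 2 + to_nat l + 3 + n') [EndN, b, enc_move d] (st C0) (out @ [SR, One1] @ ?L @ [EndN, a, ?fl] @ ?N)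
       (out @ [SR, One1] @ ?L @ [EndN, a, ?fl] @ ?N @ [EndN, b, enc_move d])"
    by (rule walk'[where L="\<lambda>k. [C4, C5, C6, C0] ! k"]) (use A' bnb enc_move_nb in \<open>auto intro: at_sub[OF A', of "[SR, One1] @ ?L @ [EndN, a, ?fl] @ ?N"] simp: dlt_simps less_Suc_eq\<close>)
  have "segrun ?w (st C0) i ([SR, One1] @ ?L @ [EndN, a, ?fl] @ ?N @ [EndN, b, enc_move d]) (st C0) out
      (out @ [SR, One1] @ ?L @ [EndN, a, ?fl] @ ?N @ [EndN, b, enc_move d])"
    by (rule seg_comp'[OF 1 _ seg_comp'[OF 2 _ seg_comp'[OF 3 _ seg_comp'[OF 4 _ 5]]]]) simp_all
  then show ?thesis using e by simp
qed

lemma copyP: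
  "set ts \<subseteq> set P \<Longrightarrow> at (code g pc s0) i (concat (map enc_tuple ts)) \<Longrightarrow>
   segrun (code g pc s0) (st C0) i (concat (map enc_tuple ts)) (st C0) out (out @ concat (map enc_tuple ts))"
proof (induction ts arbitrary: i out)
  case Nil then show ?case by (simp add: segrun_def)
next
  case (Cons t ts)
  have 1: "segrun (code g pc s0) (st C0) i (enc_tuple t) (st C0) out (out @ enc_tuple t)"
    by (rule copy_tuple) (use Cons.prems in \<open>auto intro: at_sub[OF Cons.prems(2), of "[]"]\<close>)
  have 2: "segrun (code g pc s0) (st C0) (i + length (enc_tuple t)) (concat (map enc_tuple ts)) (st C0) (out @ enc_tuple t)
     ((out @ enc_tuple t) @ concat (map enc_tuple ts))"
    by (rule Cons.IH) (use Cons.prems in \<open>auto intro: at_sub[OF Cons.prems(2), of "enc_tuple t" _ "[]"]\<close>)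
  show ?case using seg_comp'[OF 1 _ 2] by simp
qed

lemma final_E:
  assumes A: "at (code g pc s0) i (enc_tuple Et)"
  shows "\<exists>c. (step_nq (code g pc s0))\<^sup>*\<^sup>* (st C0, i, out) c \<and> step (code g pc s0) c (q1, i + 6, out @ enc_tuple Et)"
proof -
  let ?w = "code g pc s0"
  have A': "at ?w i ([SR, EndN, EndN, SR, EndN, Z] @ [MvN])" using A by (simp add: enc_Et)
  have 1: "segrun ?w (st C0) i [SR, EndN, EndN, SR, EndN, Z] (st E6) out (out @ [SR, EndN, EndN, SR, EndN, Z])"
    by (rule walk'[where L="\<lambda>k. [C0, C1f, E2, E3, E4, E5, E6] ! k"]) (use A' in \<open>auto intro: at_sub[OF A', of "[]"] simp: dlt_simps less_Suc_eq\<close>)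
  have a: "at ?w (i + 6) [MvN]" by (rule at_sub[OF A', of "[SR, EndN, EndN, SR, EndN, Z]" _ "[]"]) simp_all
  have ht: "has_tuple ?w (st E6, MvN, q1, MvN, Stay)" by (rule dlt_tuple) (simp_all add: dlt_simps)
  have "step ?w (st E6, i + 6, out @ [SR, EndN, EndN, SR, EndN, Z]) (q1, i + 6, (out @ [SR, EndN, EndN, SR, EndN, Z]) @ [MvN])"
    using at1[OF a] ht unfolding step_def
    by (simp only: split) (rule exI[of _ MvN], rule exI[of _ MvN], rule exI[of _ Stay], simp)
  moreover have "(step_nq ?w)\<^sup>*\<^sup>* (st C0, i, out) (st E6, i + 6, out @ [SR, EndN, EndN, SR, EndN, Z])"
    using 1 unfolding segrun_def by (simp add: eval_nat_numeral)
  ultimately show ?thesis unfolding enc_Et by (intro exI[of _ "(st E6, i + 6, out @ [SR, EndN, EndN, SR, EndN, Z])"]) simp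
qed
end

context am begin

lemma EP_SR: "\<exists>r. concat (map enc_tuple P) @ enc_tuple Et = SR # r"
proof (cases P)
  case Nil then show ?thesis by (simp add: enc_Et)
next
  case (Cons t ts)
  then have "t \<in> set P" by simp
  then obtain l a q' b d where "t = (st l, a, q', b, d)" using P_mem by blast
  then show ?thesis using Cons by (simp add: st_def)
qed

lemma run_gen:
  assumes pc: "pc < length prog" and ar: "areg (prog ! pc) < K"
  shows "\<exists>c i. (step_nq (code (tj, t, u) pc s))\<^sup>*\<^sup>* (q0, 0, []) c \<and>
     step (code (tj, t, u) pc s) c (q1, i, code (Suc tj, Suc t, u + QL pc) (npc pc (zb pc s K)) (newregs pc s))"
proof -
  let ?w = "code (tj, t, u) pc s"
  let ?J = "enc_tuple (Jt tj)"
  let ?R = "Rs t s K"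
  let ?J2 = "enc_tuple (J2t u)"
  let ?Q = "enc_tuple (qtup pc)"
  let ?EP = "concat (map enc_tuple P)"
  let ?E = "enc_tuple Et"
  let ?z = "zb pc s K"
  let ?s' = "newregs pc s"
  have cw: "?w = ?J @ ?R @ ?J2 @ ?Q @ ?EP @ ?E" by (simp add: code_split Rs_def)
  have A: "at ?w (Suc 0) (?J @ ?R @ ?J2 @ ?Q @ ?EP @ ?E)" using at_code[of ?w] cw by simp
  obtain r where r: "?EP @ ?E = SR # r" using EP_SR by blast
  have s0: "step_nq ?w (q0, 0, []) (st (LI pc), 0, [])"
  proof -
    have "has_tuple ?w (q0, Z, st (LI pc), Z, Stay)"
      by (simp add: has_tuple_code TS_def qtup_def)
    then show ?thesis unfolding step_nq_def step_def by (auto simp: q0_def)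
  qed
  have 1: "segrun ?w (st (LI pc)) 0 ([LEnd] @ ?J) (st (RA pc 0 False)) [] (enc_tuple (Jt (Suc tj)))"
    by (rule front[OF pc])
  have 2: "segrun ?w (st (RA pc 0 False)) (Suc (length ?J)) ?R (st (RA pc K ?z)) (enc_tuple (Jt (Suc tj)))
      (enc_tuple (Jt (Suc tj)) @ Rs (Suc t) ?s' K)"
    by (rule pass[OF pc ar _ order_refl]) (rule at_sub[OF A, of "?J" _ "?J2 @ ?Q @ ?EP @ ?E"], simp_all)
  have A3: "at ?w (Suc (length ?J) + length ?R) (?J2 @ ?Q @ [SR])"
    by (rule at_sub[OF A, of "?J @ ?R" _ r]) (simp_all add: r)
  have 3: "segrun ?w (st (RA pc K ?z)) (Suc (length ?J) + length ?R) (?J2 @ ?Q) (st C0)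
      (enc_tuple (Jt (Suc tj)) @ Rs (Suc t) ?s' K)
      ((enc_tuple (Jt (Suc tj)) @ Rs (Suc t) ?s' K) @ enc_tuple (J2t (u + QL pc)) @ enc_tuple (qtup (npc pc ?z)))"
    by (rule j2region[OF pc A3])
  have 4: "segrun ?w (st C0) (Suc (length ?J) + length ?R + length (?J2 @ ?Q)) ?EP (st C0)
      ((enc_tuple (Jt (Suc tj)) @ Rs (Suc t) ?s' K) @ enc_tuple (J2t (u + QL pc)) @ enc_tuple (qtup (npc pc ?z)))
      (((enc_tuple (Jt (Suc tj)) @ Rs (Suc t) ?s' K) @ enc_tuple (J2t (u + QL pc)) @ enc_tuple (qtup (npc pc ?z))) @ ?EP)"
    by (rule copyP) (auto intro: at_sub[OF A, of "?J @ ?R @ ?J2 @ ?Q" _ "?E"])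
  have A5: "at ?w (Suc (length ?J) + length ?R + length (?J2 @ ?Q) + length ?EP) ?E"
    by (rule at_sub[OF A, of "?J @ ?R @ ?J2 @ ?Q @ ?EP" _ "[]"]) simp_all
  obtain c where c: "(step_nq ?w)\<^sup>*\<^sup>* (st C0, Suc (length ?J) + length ?R + length (?J2 @ ?Q) + length ?EP,
        (((enc_tuple (Jt (Suc tj)) @ Rs (Suc t) ?s' K) @ enc_tuple (J2t (u + QL pc)) @ enc_tuple (qtup (npc pc ?z))) @ ?EP)) c"
    "step ?w c (q1, Suc (length ?J) + length ?R + length (?J2 @ ?Q) + length ?EP + 6,
        (((enc_tuple (Jt (Suc tj)) @ Rs (Suc t) ?s' K) @ enc_tuple (J2t (u + QL pc)) @ enc_tuple (qtup (npc pc ?z))) @ ?EP) @ ?E)"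
    using final_E[OF A5] by blast
  have all: "segrun ?w (st (LI pc)) 0 (([LEnd] @ ?J) @ ?R @ (?J2 @ ?Q) @ ?EP) (st C0) []
      (((enc_tuple (Jt (Suc tj)) @ Rs (Suc t) ?s' K) @ enc_tuple (J2t (u + QL pc)) @ enc_tuple (qtup (npc pc ?z))) @ ?EP)"
    by (rule seg_comp'[OF 1 _ seg_comp'[OF 2 _ seg_comp'[OF 3 _ 4]]]) simp_all
  have path: "(step_nq ?w)\<^sup>*\<^sup>* (q0, 0, []) c"
    using s0 all c(1) unfolding segrun_def
    by (simp add: add.assoc)
  have "code (Suc tj, Suc t, u + QL pc) (npc pc ?z) ?s' =
      (((enc_tuple (Jt (Suc tj)) @ Rs (Suc t) ?s' K) @ enc_tuple (J2t (u + QL pc)) @ enc_tuple (qtup (npc pc ?z))) @ ?EP) @ ?E"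
    by (simp add: code_split Rs_def)
  then show ?thesis using path c(2) by metis
qed


lemma halt_no_offspring:
  assumes pc: "\<not> pc < length prog"
  shows "\<not> offspring (code g pc s) w'"
proof
  assume "offspring (code g pc s) w'"
  then obtain c i where p: "(step_nq (code g pc s))\<^sup>*\<^sup>* (q0, 0, []) c" "step (code g pc s) c (q1, i, w')"
    unfolding offspring_def by blast
  have s0: "step_nq (code g pc s) (q0, 0, []) (st (LI pc), 0, [])"
  proof -
    have "has_tuple (code g pc s) (q0, Z, st (LI pc), Z, Stay)"
      by (cases g) (simp add: has_tuple_code TS_def qtup_def)
    then show ?thesis unfolding step_nq_def step_def by (auto simp: q0_def)
  qed
  have nostep: "\<not> step (code g pc s) (st (LI pc), 0, []) c'" for c'
  proof
    assume "step (code g pc s) (st (LI pc), 0, []) c'"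
    then obtain a q' b d where "has_tuple (code g pc s) (st (LI pc), a, q', b, d)"
      unfolding step_def by (auto split: prod.splits)
    then have "dlt (LI pc) a = Some (q', b, d)" by (rule has_tuple_st)
    then show False using pc by (simp add: dlt_simps split: if_splits)
  qed
  show False
    by (rule stuck_no_q1[OF proper_code r_into_rtranclp[of "step_nq (code g pc s)", OF s0] nostep p])
qed

definition nxtg :: "nat \<Rightarrow> nat \<times> nat \<times> nat \<Rightarrow> nat \<times> nat \<times> nat" where
  "nxtg pc g = (case g of (tj, t, u) \<Rightarrow> (Suc tj, Suc t, u + QL pc))"

lemma cstep_npc:
  assumes "cstep prog (pc, s) (pc', s')" "areg (prog ! pc) < K"
  shows "pc < length prog" "pc' = npc pc (zb pc s K)" "s' = newregs pc s"
  using assms by (auto simp: cstep_def npc_def zb_def newregs_def split: instr.splits if_splits)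

lemma offspring_step:
  assumes "cstep prog (pc, s) (pc', s')" "areg (prog ! pc) < K"
  shows "offspring (code g pc s) (code (nxtg pc g) pc' s')"
proof -
  obtain tj t u where g: "g = (tj, t, u)" by (cases g) auto
  from cstep_npc[OF assms] run_gen[of pc tj t u s] assms(2) show ?thesis
    unfolding offspring_def by (auto simp: g nxtg_def proper_code)
qed

lemma offspring_unique:
  assumes "cstep prog (pc, s) (pc', s')" "areg (prog ! pc) < K" "offspring (code g pc s) w'"
  shows "w' = code (nxtg pc g) pc' s'"
proof -
  obtain tj t u where g: "g = (tj, t, u)" by (cases g) auto
  from offspring_step[OF assms(1,2), of g] obtain c1 i1 where
    p1: "(step_nq (code g pc s))\<^sup>*\<^sup>* (q0, 0, []) c1" "step (code g pc s) c1 (q1, i1, code (nxtg pc g) pc' s')"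
    unfolding offspring_def by blast
  from assms(3) obtain c2 i2 where p2: "(step_nq (code g pc s))\<^sup>*\<^sup>* (q0, 0, []) c2" "step (code g pc s) c2 (q1, i2, w')"
    unfolding offspring_def by blast
  show ?thesis by (rule first_q1_unique[OF proper_code p1 p2])
qed

lemma lineage_inf:
  assumes ar: "\<forall>pc<length prog. areg (prog ! pc) < K"
    and cl: "cstep prog cl cl"
  shows "(cstep prog)\<^sup>*\<^sup>* c0 cl \<Longrightarrow> \<forall>g. infinite_lineage (code g (fst c0) (snd c0))"
proof (induction rule: converse_rtranclp_induct)
  case base
  obtain pc s where c: "cl = (pc, s)" by (cases cl)
  have pcl: "pc < length prog" using cl c by (simp add: cstep_def)
  have ar': "areg (prog ! pc) < K" using ar pcl by simp
  show ?case
  proof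
    fix g
    define G where "G = (\<lambda>n. ((nxtg pc) ^^ n) g)"
    show "infinite_lineage (code g (fst cl) (snd cl))"
      unfolding infinite_lineage_def
    proof (intro exI[of _ "\<lambda>n. code (G n) pc s"] conjI allI)
      show "code (G 0) pc s = code g (fst cl) (snd cl)" by (simp add: G_def c)
      fix n
      show "offspring (code (G n) pc s) (code (G (Suc n)) pc s)"
        using offspring_step[OF cl[unfolded c] ar', of "G n"] by (simp add: G_def)
    qed
  qed
next
  case (step c0 c1)
  obtain pc s where c: "c0 = (pc, s)" by (cases c0)
  obtain pc' s' where c': "c1 = (pc', s')" by (cases c1)
  have pcl: "pc < length prog" using step.hyps(1) c by (simp add: cstep_def)
  have ar': "areg (prog ! pc) < K" using ar pcl by simp
  show ?case
  proof
    fix g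
    have "infinite_lineage (code (nxtg pc g) pc' s')" using spec[OF step.IH, of "nxtg pc g"] c' by simp
    then obtain A where A: "A 0 = code (nxtg pc g) pc' s'" "\<forall>n. offspring (A n) (A (Suc n))"
      unfolding infinite_lineage_def by blast
    have o: "offspring (code g pc s) (code (nxtg pc g) pc' s')"
      using offspring_step[OF step.hyps(1)[unfolded c c'] ar'] .
    show "infinite_lineage (code g (fst c0) (snd c0))"
      unfolding infinite_lineage_def
    proof (intro exI[of _ "\<lambda>n. if n = 0 then code g pc s else A (n - 1)"] conjI allI)
      fix n show "offspring (if n = 0 then code g pc s else A (n - 1)) (if Suc n = 0 then code g pc s else A (Suc n - 1))"
        using o A by (cases n) auto
    qed (simp add: c)
  qed
qed

lemma lineage_fin:
  assumes ar: "\<forall>pc<length prog. areg (prog ! pc) < K"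
    and ch: "\<not> fst ch < length prog"
  shows "(cstep prog)\<^sup>*\<^sup>* c0 ch \<Longrightarrow> \<forall>g. \<not> infinite_lineage (code g (fst c0) (snd c0))"
proof (induction rule: converse_rtranclp_induct)
  case base
  show ?case
  proof (intro allI notI)
    fix g assume "infinite_lineage (code g (fst ch) (snd ch))"
    then obtain A where "A 0 = code g (fst ch) (snd ch)" "offspring (A 0) (A (Suc 0))"
      unfolding infinite_lineage_def by blast
    then show False using halt_no_offspring[OF ch] by metis
  qed
next
  case (step c0 c1)
  obtain pc s where c: "c0 = (pc, s)" by (cases c0)
  obtain pc' s' where c': "c1 = (pc', s')" by (cases c1)
  have pcl: "pc < length prog" using step.hyps(1) c by (simp add: cstep_def)
  have ar': "areg (prog ! pc) < K" using ar pcl by simp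
  show ?case
  proof (intro allI notI)
    fix g assume "infinite_lineage (code g (fst c0) (snd c0))"
    then obtain A where A: "A 0 = code g pc s" "\<forall>n. offspring (A n) (A (Suc n))"
      unfolding infinite_lineage_def c by auto
    have "A 1 = code (nxtg pc g) pc' s'"
      using offspring_unique[OF step.hyps(1)[unfolded c c'] ar'] A by (metis One_nat_def)
    then have "infinite_lineage (code (nxtg pc g) (fst c1) (snd c1))"
      unfolding infinite_lineage_def c' using A by (intro exI[of _ "\<lambda>n. A (Suc n)"]) auto
    then show False using step.IH by blast
  qed
qed
end


lemma word_num_append: "word_num (u @ v) = word_num u + 11 ^ length u * word_num v"
  by (induction u) (auto simp: algebra_simps)

fun constf :: "nat \<Rightarrow> recf" where
  "constf 0 = Zr" | "constf (Suc c) = Cn 1 Sc [constf c]"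

lemma ev_const: "rec_eval (constf c) [x] c"
  by (induction c) (auto intro: rec_eval.intros)

definition idf :: recf where "idf = Id 1 0"
lemma ev_id: "rec_eval idf [x] x"
  using rec_eval.ev_Id[of 0 1 "[x]"] by (simp add: idf_def)

definition addf :: recf where "addf = Pr 1 (Id 1 0) (Cn 3 Sc [Id 3 1])"
lemma ev_add: "rec_eval addf [x, y] (x + y)"
proof (induction x)
  case 0
  have "rec_eval (Id 1 0) [y] y" using rec_eval.ev_Id[of 0 1 "[y]"] by simp
  then show ?case unfolding addf_def using rec_eval.ev_Pr0[of "[y]" 1 "Id 1 0" y "Cn 3 Sc [Id 3 1]"] by simp
next
  case (Suc x)
  have "rec_eval (Id 3 1) [x, x + y, y] (x + y)" using rec_eval.ev_Id[of 1 3 "[x, x + y, y]"] by simp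
  then have "rec_eval (Cn 3 Sc [Id 3 1]) [x, x + y, y] (Suc (x + y))"
    by (intro rec_eval.ev_Cn[where ys = "[x + y]"]) (auto intro: rec_eval.intros)
  then show ?case using Suc unfolding addf_def by (auto intro: rec_eval.ev_PrS)
qed

definition mulf :: recf where "mulf = Pr 1 Zr (Cn 3 addf [Id 3 1, Id 3 2])"
lemma ev_mul: "rec_eval mulf [x, y] (x * y)"
proof (induction x)
  case 0
  show ?case unfolding mulf_def using rec_eval.ev_Pr0[of "[y]" 1 Zr 0] by (auto intro: rec_eval.intros)
next
  case (Suc x)
  have a: "rec_eval (Id 3 1) [x, x * y, y] (x * y)" using rec_eval.ev_Id[of 1 3 "[x, x * y, y]"] by simp
  have b: "rec_eval (Id 3 2) [x, x * y, y] y" using rec_eval.ev_Id[of 2 3 "[x, x * y, y]"] by simp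
  have "rec_eval (Cn 3 addf [Id 3 1, Id 3 2]) [x, x * y, y] (x * y + y)"
    by (rule rec_eval.ev_Cn[where ys = "[x * y, y]"]) (use a b ev_add in auto)
  then show ?case using Suc unfolding mulf_def by (auto intro: rec_eval.ev_PrS simp: add.commute)
qed

lemma ev_comp2: "rec_eval G1 [a] v1 \<Longrightarrow> rec_eval G2 [a] v2 \<Longrightarrow> rec_eval F [v1, v2] z \<Longrightarrow> rec_eval (Cn 1 F [G1, G2]) [a] z"
  by (rule rec_eval.ev_Cn[where ys = "[v1, v2]"]) auto

lemma ev_comp1: "rec_eval G1 [a] v1 \<Longrightarrow> rec_eval F [v1] z \<Longrightarrow> rec_eval (Cn 1 F [G1]) [a] z"
  by (rule rec_eval.ev_Cn[where ys = "[v1]"]) auto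

definition iterf :: "nat \<Rightarrow> recf \<Rightarrow> recf" where
  "iterf c0 g = Cn 1 (Pr 1 (constf c0) (Cn 3 g [Id 3 1])) [Id 1 0, Id 1 0]"

lemma ev_iter:
  assumes g: "\<And>y. rec_eval g [y] (G y)"
  shows "rec_eval (iterf c0 g) [a] ((G ^^ a) c0)"
proof -
  have pr: "rec_eval (Pr 1 (constf c0) (Cn 3 g [Id 3 1])) [x, d] ((G ^^ x) c0)" for x d
  proof (induction x)
    case 0 then show ?case using rec_eval.ev_Pr0[of "[d]" 1 "constf c0" c0] ev_const by simp
  next
    case (Suc x)
    have a: "rec_eval (Id 3 1) [x, (G ^^ x) c0, d] ((G ^^ x) c0)" using rec_eval.ev_Id[of 1 3 "[x, (G ^^ x) c0, d]"] by simp
    have "rec_eval (Cn 3 g [Id 3 1]) [x, (G ^^ x) c0, d] (G ((G ^^ x) c0))"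
      by (rule rec_eval.ev_Cn[where ys = "[(G ^^ x) c0]"]) (use a g in auto)
    then show ?case using Suc by (auto intro: rec_eval.ev_PrS)
  qed
  have i: "rec_eval (Id 1 0) [a] a" using rec_eval.ev_Id[of 0 1 "[a]"] by simp
  show ?thesis unfolding iterf_def by (rule ev_comp2[OF i i pr])
qed

definition pow11f :: recf where "pow11f = iterf 1 (Cn 1 mulf [constf 11, idf])"
lemma ev_pow11: "rec_eval pow11f [a] (11 ^ a)"
proof -
  have g: "rec_eval (Cn 1 mulf [constf 11, idf]) [y] ((\<lambda>y. 11 * y) y)" for y
    by (rule ev_comp2[OF ev_const ev_id ev_mul])
  have "((\<lambda>y. 11 * y) ^^ a) 1 = (11::nat) ^ a" by (induction a) auto
  then show ?thesis using ev_iter[OF g, of 1 a] unfolding pow11f_def by simp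
qed

definition repf :: recf where "repf = iterf 0 (Cn 1 addf [constf 2, Cn 1 mulf [constf 11, idf]])"
lemma ev_rep: "rec_eval repf [a] (word_num (replicate a One1))"
proof -
  have m: "rec_eval (Cn 1 mulf [constf 11, idf]) [y] (11 * y)" for y
    by (rule ev_comp2[OF ev_const ev_id ev_mul])
  have g: "rec_eval (Cn 1 addf [constf 2, Cn 1 mulf [constf 11, idf]]) [y] ((\<lambda>y. 2 + 11 * y) y)" for y
    by (rule ev_comp2[OF ev_const m ev_add])
  have "((\<lambda>y. 2 + 11 * y) ^^ a) 0 = word_num (replicate a One1)" by (induction a) auto
  then show ?thesis using ev_iter[OF g, of 0 a] unfolding repf_def by simp
qed

definition pre0 :: "nat \<Rightarrow> sym list" where
  "pre0 a = enc_tuple (Jt 0) @ enc_tuple (regt 0 (\<lambda>r. if r = 0 then a else 0) 0)"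

definition c1 :: nat where "c1 = word_num [SR, EndN, Z, ST, EndN, Z, MvN, ST, One1, EndN, Z, ST]"
definition c2 :: nat where "c2 = word_num [EndN, Z, MvN]"

lemma pre0_eq: "pre0 a = [SR, EndN, Z, ST, EndN, Z, MvN, ST, One1, EndN, Z, ST] @ replicate a One1 @ [EndN, Z, MvN]"
  by (simp add: pre0_def enc_Jt enc_regt)

definition n0 :: "nat \<Rightarrow> nat" where "n0 a = word_num (pre0 a) + 11 ^ length (pre0 a) * a"

lemma n0_eq: "n0 a = c1 + (11^12 * word_num (replicate a One1) + (c2 * 11^12 * 11^a + 11^15 * 11^a * a))"
proof -
  have "word_num (pre0 a) = c1 + 11^12 * (word_num (replicate a One1) + 11^a * c2)"
    unfolding pre0_eq word_num_append c1_def c2_def by simp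
  moreover have "length (pre0 a) = 15 + a" by (simp add: pre0_eq)
  ultimately show ?thesis unfolding n0_def by (simp add: algebra_simps power_add)
qed

definition Nf :: recf where
  "Nf = Cn 1 addf [constf c1, Cn 1 addf [Cn 1 mulf [constf (11^12), repf],
           Cn 1 addf [Cn 1 mulf [constf (c2 * 11^12), pow11f], Cn 1 mulf [Cn 1 mulf [constf (11^15), pow11f], idf]]]]"

lemma ev_N: "rec_eval Nf [a] (n0 a)"
proof -
  have 1: "rec_eval (Cn 1 mulf [constf (11^12), repf]) [a] (11^12 * word_num (replicate a One1))"
    by (rule ev_comp2[OF ev_const ev_rep ev_mul])
  have 2: "rec_eval (Cn 1 mulf [constf (c2 * 11^12), pow11f]) [a] (c2 * 11^12 * 11^a)"
    by (rule ev_comp2[OF ev_const ev_pow11 ev_mul])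
  have 3: "rec_eval (Cn 1 mulf [Cn 1 mulf [constf (11^15), pow11f], idf]) [a] (11^15 * 11^a * a)"
    by (rule ev_comp2[OF ev_comp2[OF ev_const ev_pow11 ev_mul] ev_id ev_mul])
  have 4: "rec_eval (Cn 1 addf [Cn 1 mulf [constf (c2 * 11^12), pow11f], Cn 1 mulf [Cn 1 mulf [constf (11^15), pow11f], idf]]) [a]
     (c2 * 11^12 * 11^a + 11^15 * 11^a * a)"
    by (rule ev_comp2[OF 2 3 ev_add])
  have 5: "rec_eval (Cn 1 addf [Cn 1 mulf [constf (11^12), repf],
           Cn 1 addf [Cn 1 mulf [constf (c2 * 11^12), pow11f], Cn 1 mulf [Cn 1 mulf [constf (11^15), pow11f], idf]]]) [a]
     (11^12 * word_num (replicate a One1) + (c2 * 11^12 * 11^a + 11^15 * 11^a * a))"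
    by (rule ev_comp2[OF 1 4 ev_add])
  show ?thesis unfolding Nf_def n0_eq by (rule ev_comp2[OF ev_const 5 ev_add])
qed


definition maxreg :: "instr list \<Rightarrow> nat" where "maxreg p = foldr (\<lambda>i m. max (areg i) m) p 0"

lemma areg_le: "i \<in> set p \<Longrightarrow> areg i \<le> maxreg p"
  by (induction p) (auto simp: maxreg_def)

theorem theorem4:
  shows "\<not> (\<exists>f :: recf. \<forall>w. proper_code w \<longrightarrow>
            rec_eval f [word_num w] (if infinite_lineage w then 1 else 0))"
proof
  assume "\<exists>f :: recf. \<forall>w. proper_code w \<longrightarrow> rec_eval f [word_num w] (if infinite_lineage w then 1 else 0)"
  then obtain f where hf: "\<And>w. proper_code w \<Longrightarrow> rec_eval f [word_num w] (if infinite_lineage w then 1 else 0)"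
    by blast
  define H where "H = Cn 1 f [Nf]"
  define cp where "cp = comp H [0] 2 3"
  define prog where "prog = cp \<bullet> [Dec 2 0]"
  define K where "K = Suc (maxreg prog)"
  have ar: "\<forall>pc<length prog. areg (prog ! pc) < K"
    using areg_le nth_mem unfolding K_def by (metis le_imp_less_Suc)
  have prog_eq: "prog = cp @ [Dec 2 (length cp)]" by (simp add: prog_def sq_def shift_def)
  define Rest where "Rest = concat (map enc_tuple (map (regt 0 (\<lambda>_. 0)) [1..<K])) @ enc_tuple (J2t 0) @
     enc_tuple (qtup 0) @ concat (map enc_tuple (am.P prog K)) @ enc_tuple Et"
  define a where "a = word_num Rest"
  define s0 where "s0 = (\<lambda>r::nat. if r = 0 then a else 0)"
  define A0 where "A0 = am.code prog K (0, 0, 0) 0 s0"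
  have upt: "[0..<K] = 0 # [1..<K]" unfolding K_def by (simp add: upt_conv_Cons)
  have mp: "map (regt 0 s0) [1..<K] = map (regt 0 (\<lambda>_. 0)) [1..<K]"
    by (intro map_cong refl) (auto simp: regt_def s0_def)
  have mp': "concat (map enc_tuple (map (regt 0 s0) [1..<K])) = concat (map enc_tuple (map (regt 0 (\<lambda>_. 0)) [1..<K]))"
    by (simp only: mp)
  have p: "pre0 a = enc_tuple (Jt 0) @ enc_tuple (regt 0 s0 0)" by (simp add: pre0_def s0_def)
  have A0_eq: "A0 = pre0 a @ Rest"
    unfolding A0_def am.code_split upt p Rest_def by (simp only: list.map concat.simps append_assoc mp')
  have wA0: "word_num A0 = n0 a" unfolding A0_eq word_num_append n0_def a_def ..
  let ?v = "if infinite_lineage A0 then 1 else 0 :: nat"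
  have pA0: "proper_code A0" unfolding A0_def by (rule am.proper_code)
  have evf: "rec_eval f [n0 a] ?v" using hf[OF pA0] wA0 by simp
  have evH: "rec_eval H [a] ?v" unfolding H_def by (rule ev_comp1[OF ev_N evf])
  have R: "reaches cp s0 (s0(2 := ?v))"
    unfolding cp_def by (rule OKD[OF OK_all evH]) (auto simp: s0_def)
  have P1: "(cstep prog)\<^sup>*\<^sup>* (0, s0) (length cp, s0(2 := ?v))"
    using reaches_embed[OF R, of "[]" "shift (length cp) [Dec 2 0]"] by (simp add: prog_def sq_def)
  have nth: "prog ! length cp = Dec 2 (length cp)" "length prog = Suc (length cp)" by (simp_all add: prog_eq)
  show False
  proof (cases "infinite_lineage A0")
    case True
    then have v: "?v = 1" by simp
    have st1: "cstep prog (length cp, s0(2 := 1)) (Suc (length cp), s0)"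
      using nth by (auto simp: cstep_def s0_def)
    have "(cstep prog)\<^sup>*\<^sup>* (0, s0) (Suc (length cp), s0)"
      using rtranclp.rtrancl_into_rtrancl[OF P1[unfolded v] st1] .
    from am.lineage_fin[OF ar _ this] nth have "\<not> infinite_lineage (am.code prog K (0, 0, 0) 0 s0)" by auto
    then show False using True A0_def by simp
  next
    case False
    then have v: "?v = 0" by simp
    have e: "s0(2 := 0) = s0" by (auto simp: s0_def)
    have st1: "cstep prog (length cp, s0) (length cp, s0)"
      using nth by (auto simp: cstep_def s0_def)
    have "(cstep prog)\<^sup>*\<^sup>* (0, s0) (length cp, s0)" using P1 v e by simp
    from am.lineage_inf[OF ar st1 this] have "infinite_lineage (am.code prog K (0, 0, 0) 0 s0)" by auto
    then show False using False A0_def by simp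
  qed
qed


end
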